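(* $\mathbf T_{m+1}$ is a Poisson submanifold of $(\mathfrak g,{\rm PB}_2({\rm A}_1,{\rm A}_2,{\rm S}))$, and the induced bracket is given, for $1\le i,j\le m$ and all $k$, by $\{b_k,b_{k+1}\}_2=-a_k^{(1)}$; $\{b_k,a_{k+1}^{(j)}\}_2=-a_k^{(j+1)}$, $\{a_k^{(j)},b_{k+j+1}\}_2=-a_k^{(j+1)}$; $\{b_k,a_k^{(j)}\}_2=-b_ka_k^{(j)}$, $\{a_k^{(j)},b_{k+j}\}_2=-a_k^{(j)}b_{k+j}$; $\{a_k^{(i)},a_{k+i+1}^{(j)}\}_2=-a_k^{(i+j+1)}$; for $i<j$: $\{a_k^{(i)},a_k^{(j)}\}_2=-a_k^{(i)}a_k^{(j)}$ and $\{a_k^{(j)},a_{k+j-i}^{(i)}\}_2=-a_k^{(j)}a_{k+j-i}^{(i)}$; for $i\le j$ and $1\le\ell\le i$: $\{a_k^{(i)},a_{k+\ell}^{(j)}\}_2=-a_k^{(i)}a_{k+\ell}^{(j)}-a_k^{(j+\ell)}a_{k+\ell}^{(i-\ell)}$; for $i\le j$ and $j-i+1\le\ell\le j$: $\{a_k^{(j)},a_{k+\ell}^{(i)}\}_2=-a_k^{(j)}a_{k+\ell}^{(i)}-a_k^{(i+\ell)}a_{k+\ell}^{(j-\ell)}$; all other brackets between coordinate functions (other than those obtained by antisymmetry) vanish. (Here $N\ge2m+2$, so that the index patterns are distinct modulo $N$.)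
   Context: Periodic lattice setting. Fix integers $N\ge2$, $m\ge1$, $\omega=e^{2\pi i/N}$, $\Omega=\mathrm{diag}(1,\omega,\dots,\omega^{N-1})$. $\mathfrak g=\{X(\lambda)\in gl(N)[\lambda,\lambda^{-1}]:\Omega X(\lambda)\Omega^{-1}=X(\omega\lambda)\}$ (finite sums $\sum_p\lambda^p\sum_{j-k\equiv p\,(\mathrm{mod}\,N)}x^{(p)}_{jk}E_{jk}$), matrix indices and lattice subscripts modulo $N$; scalar product $\langle X,Y\rangle$ = coefficient of $\lambda^0$ in $\mathrm{tr}(XY)$. $\mathfrak g_p$ = elements $\lambda^p\sum_{j-k\equiv p}x_{jk}E_{jk}$; $P_0,P_{>0},P_{<0}$ etc. are the projections onto $\mathfrak g_0$, $\oplus_{p>0}\mathfrak g_p$, $\oplus_{p<0}\mathfrak g_p$, etc. ${\rm R}_0=P_{>0}-P_{<0}$. $W$ is linear with $W=W\circ P_0$ and $W(E_{kk})=\sum_{j=1}^N\mathrm{sgn}(k-j)E_{jj}$. ${\rm A}_1={\rm R}_0+W$, ${\rm A}_2={\rm R}_0-W$, ${\rm S}=P_0-W$, ${\rm S}^*=P_0+W$. Gradient: $\langle\nabla\varphi(L),M\rangle=\frac{d}{d\varepsilon}\varphi(L+\varepsilon M)|_{\varepsilon=0}$; $d\varphi=L\nabla\varphi$, $d'\varphi=\nabla\varphi L$. ${\rm PB}_2({\rm A}_1,{\rm A}_2,{\rm S})$: $\{\varphi,\psi\}_2(L)=\frac12\langle{\rm A}_1(d'\varphi),d'\psi\rangle-\frac12\langle{\rm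 A}_2(d\varphi),d\psi\rangle+\frac12\langle{\rm S}(d\varphi),d'\psi\rangle-\frac12\langle{\rm S}^*(d'\varphi),d\psi\rangle$. $\mathcal E=\lambda\sum_kE_{k+1,k}$; $\mathbf T_{m+1}$ = set of $T=\mathcal E+\sum_kb_kE_{kk}+\sum_{j=1}^m\lambda^{-j}\sum_ka_k^{(j)}E_{k,k+j}$; coordinate functions $b_k(X)$ = coefficient of $\lambda^0E_{kk}$, $a_k^{(j)}(X)$ = coefficient of $\lambda^{-j}E_{k,k+j}$. Convention: $a_k^{(0)}=b_k$, $a_k^{(i)}=0$ for $i<0$ or $i>m$. *)

theory Defs
  imports Complex_Main
begin

text \<open>An element X(lambda) = sum_p lambda^p X_p is encoded
  as the coefficient function  X p j k  = coefficient of lambda^p E_{jk}, matrix indices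
  j, k in {0..N-1} (a shift of the paper's 1..N; lattice subscripts are taken modulo N).\<close>

type_synonym lmat = "int \<Rightarrow> nat \<Rightarrow> nat \<Rightarrow> complex"

definition lsupp :: "lmat \<Rightarrow> int set" where
  "lsupp X = {p. \<exists>j k. X p j k \<noteq> 0}"

definition gset :: "nat \<Rightarrow> lmat set" where
  "gset N = {X. finite (lsupp X) \<and>
      (\<forall>p j k. X p j k \<noteq> 0 \<longrightarrow> j < N \<and> k < N \<and> (int j - int k - p) mod int N = 0)}"

definition ladd :: "lmat \<Rightarrow> lmat \<Rightarrow> lmat" where
  "ladd X Y = (\<lambda>p j k. X p j k + Y p j k)"

definition lsmul :: "complex \<Rightarrow> lmat \<Rightarrow> lmat" where
  "lsmul c X = (\<lambda>p j k. c * X p j k)"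

definition lmul :: "nat \<Rightarrow> lmat \<Rightarrow> lmat \<Rightarrow> lmat" where
  "lmul N X Y = (\<lambda>p j k. \<Sum>q\<in>lsupp X. \<Sum>l<N. X q j l * Y (p - q) l k)"

definition lpair :: "nat \<Rightarrow> lmat \<Rightarrow> lmat \<Rightarrow> complex" where
  "lpair N X Y = (\<Sum>j<N. lmul N X Y 0 j j)"

definition P0 :: "lmat \<Rightarrow> lmat" where
  "P0 X = (\<lambda>p j k. if p = 0 then X p j k else 0)"

definition Ppos :: "lmat \<Rightarrow> lmat" where
  "Ppos X = (\<lambda>p j k. if p > 0 then X p j k else 0)"

definition Pneg :: "lmat \<Rightarrow> lmat" where
  "Pneg X = (\<lambda>p j k. if p < 0 then X p j k else 0)"

definition R0 :: "lmat \<Rightarrow> lmat" where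
  "R0 X = (\<lambda>p j k. Ppos X p j k - Pneg X p j k)"

text \<open>W = W o P0, W(E_kk) = sum_j sgn(k - j) E_jj  (g_0 consists of diagonal matrices).\<close>
definition Wop :: "nat \<Rightarrow> lmat \<Rightarrow> lmat" where
  "Wop N X = (\<lambda>p j k. if p = 0 \<and> j = k \<and> j < N
       then (\<Sum>i<N. of_int (sgn (int i - int j)) * P0 X 0 i i) else 0)"

definition A1op :: "nat \<Rightarrow> lmat \<Rightarrow> lmat" where
  "A1op N X = (\<lambda>p j k. R0 X p j k + Wop N X p j k)"

definition A2op :: "nat \<Rightarrow> lmat \<Rightarrow> lmat" where
  "A2op N X = (\<lambda>p j k. R0 X p j k - Wop N X p j k)"

definition Sop :: "nat \<Rightarrow> lmat \<Rightarrow> lmat" where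
  "Sop N X = (\<lambda>p j k. P0 X p j k - Wop N X p j k)"

definition Sstar :: "nat \<Rightarrow> lmat \<Rightarrow> lmat" where
  "Sstar N X = (\<lambda>p j k. P0 X p j k + Wop N X p j k)"

definition has_grad :: "nat \<Rightarrow> (lmat \<Rightarrow> complex) \<Rightarrow> lmat \<Rightarrow> lmat \<Rightarrow> bool" where
  "has_grad N \<phi> L G \<longleftrightarrow> G \<in> gset N \<and>
     (\<forall>M\<in>gset N. ((\<lambda>\<epsilon>. \<phi> (ladd L (lsmul \<epsilon> M))) has_field_derivative lpair N G M) (at 0))"

definition grad :: "nat \<Rightarrow> (lmat \<Rightarrow> complex) \<Rightarrow> lmat \<Rightarrow> lmat" where
  "grad N \<phi> L = (THE G. has_grad N \<phi> L G)"

definition dl :: "nat \<Rightarrow> (lmat \<Rightarrow> complex) \<Rightarrow> lmat \<Rightarrow> lmat" where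
  "dl N \<phi> L = lmul N L (grad N \<phi> L)"

definition dr :: "nat \<Rightarrow> (lmat \<Rightarrow> complex) \<Rightarrow> lmat \<Rightarrow> lmat" where
  "dr N \<phi> L = lmul N (grad N \<phi> L) L"

definition PB2 :: "nat \<Rightarrow> (lmat \<Rightarrow> complex) \<Rightarrow> (lmat \<Rightarrow> complex) \<Rightarrow> lmat \<Rightarrow> complex" where
  "PB2 N \<phi> \<psi> L =
      1/2 * lpair N (A1op N (dr N \<phi> L)) (dr N \<psi> L)
    - 1/2 * lpair N (A2op N (dl N \<phi> L)) (dl N \<psi> L)
    + 1/2 * lpair N (Sop N (dl N \<phi> L)) (dr N \<psi> L)
    - 1/2 * lpair N (Sstar N (dr N \<phi> L)) (dl N \<psi> L)"

text \<open>T is a Poisson submanifold (T an affine subset of g): at every point L of T the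
  Hamiltonian vector field of every function phi having a gradient at L is tangent to T,
  i.e. there is a vector V with L + t V in T for all t such that for every psi having a
  gradient at L, d/d eps psi(L + eps V) at 0 equals B phi psi L.\<close>
definition poisson_submanifold ::
    "nat \<Rightarrow> ((lmat \<Rightarrow> complex) \<Rightarrow> (lmat \<Rightarrow> complex) \<Rightarrow> lmat \<Rightarrow> complex) \<Rightarrow> lmat set \<Rightarrow> bool" where
  "poisson_submanifold N B T \<longleftrightarrow> T \<subseteq> gset N \<and>
     (\<forall>L\<in>T. \<forall>\<phi>. (\<exists>G. has_grad N \<phi> L G) \<longrightarrow>
        (\<exists>V. (\<forall>t. ladd L (lsmul t V) \<in> T) \<and>
             (\<forall>\<psi>. (\<exists>H. has_grad N \<psi> L H) \<longrightarrow>
                ((\<lambda>\<epsilon>. \<psi> (ladd L (lsmul \<epsilon> V))) has_field_derivative B \<phi> \<psi> L) (at 0))))"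

text \<open>T_{m+1}: T = calE + sum_k b_k E_kk + sum_{j=1}^m lambda^{-j} sum_k a^{(j)}_k E_{k,k+j},
  where a j k stands for a^{(j)}_k and b k for b_k.\<close>
definition Tmat :: "nat \<Rightarrow> nat \<Rightarrow> (nat \<Rightarrow> complex) \<Rightarrow> (nat \<Rightarrow> nat \<Rightarrow> complex) \<Rightarrow> lmat" where
  "Tmat N m b a = (\<lambda>p j k. if j < N \<and> k < N then
       (if p = 1 \<and> int j = (int k + 1) mod int N then 1
        else if p = 0 \<and> j = k then b k
        else if 1 \<le> - p \<and> - p \<le> int m \<and> int k = (int j - p) mod int N then a (nat (- p)) j
        else 0)
     else 0)"

definition Tset :: "nat \<Rightarrow> nat \<Rightarrow> lmat set" where
  "Tset N m = {L. \<exists>b a. L = Tmat N m b a}"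

text \<open>Coordinate functions with the convention a^{(0)}_k = b_k and a^{(i)}_k = 0 for
  i < 0 or i > m: coord N m i k X = a^{(i)}_k(X) (lattice subscript k taken mod N).\<close>
definition coord :: "nat \<Rightarrow> nat \<Rightarrow> int \<Rightarrow> int \<Rightarrow> lmat \<Rightarrow> complex" where
  "coord N m i k X =
     (if i = 0 then X 0 (nat (k mod int N)) (nat (k mod int N))
      else if 1 \<le> i \<and> i \<le> int m then X (- i) (nat (k mod int N)) (nat ((k + i) mod int N))
      else 0)"

text \<open>The index patterns (i,k),(j,l) of the brackets {a^{(i)}_k, a^{(j)}_l} listed
  explicitly in the theorem (before antisymmetry).\<close>
definition listed :: "nat \<Rightarrow> nat \<Rightarrow> int \<Rightarrow> int \<Rightarrow> int \<Rightarrow> int \<Rightarrow> bool" where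
  "listed N m i k j l \<longleftrightarrow>
     (let c = (\<lambda>d. (l - k - d) mod int N = 0) in
        (i = 0 \<and> j = 0 \<and> c 1)
      \<or> (i = 0 \<and> 1 \<le> j \<and> j \<le> int m \<and> c 1)
      \<or> (1 \<le> i \<and> i \<le> int m \<and> j = 0 \<and> c (i + 1))
      \<or> (i = 0 \<and> 1 \<le> j \<and> j \<le> int m \<and> c 0)
      \<or> (1 \<le> i \<and> i \<le> int m \<and> j = 0 \<and> c i)
      \<or> (1 \<le> i \<and> i \<le> int m \<and> 1 \<le> j \<and> j \<le> int m \<and> c (i + 1))
      \<or> (1 \<le> i \<and> i < j \<and> j \<le> int m \<and> c 0)
      \<or> (1 \<le> j \<and> j < i \<and> i \<le> int m \<and> c (i - j))
      \<or> (1 \<le> i \<and> i \<le> j \<and> j \<le> int m \<and> (\<exists>r. 1 \<le> r \<and> r \<le> i \<and> c r))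
      \<or> (1 \<le> j \<and> j \<le> i \<and> i \<le> int m \<and> (\<exists>r. i - j + 1 \<le> r \<and> r \<le> i \<and> c r)))"

end

theory Submission
  imports Defs
begin

definition rho :: "nat \<Rightarrow> int \<Rightarrow> nat" where
  "rho N x = nat (x mod int N)"

definition el :: "nat \<Rightarrow> int \<Rightarrow> int \<Rightarrow> lmat" where
  "el N p a = (\<lambda>q j k. if q = p \<and> j = rho N a \<and> k = rho N (a - p) then 1 else 0)"

lemma rho_lt: "0 < N \<Longrightarrow> rho N x < N"
  unfolding rho_def by (simp add: nat_less_iff)

lemma int_rho: "0 < N \<Longrightarrow> int (rho N x) = x mod int N"
  unfolding rho_def by simp

lemma rho_eq_iff: "0 < N \<Longrightarrow> (rho N x = rho N y) = (x mod int N = y mod int N)"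
  unfolding rho_def by (metis int_rho nat_int rho_def)

lemma lsupp_el: "0 < N \<Longrightarrow> lsupp (el N p a) = {p}"
  unfolding lsupp_def el_def by auto

lemma mod3: "(x mod n - y mod n - z) mod n = (x - y - z) mod (n::int)"
  by (metis mod_diff_eq)

lemma el_gset: "0 < N \<Longrightarrow> el N p a \<in> gset N"
  unfolding gset_def
  apply (simp add: lsupp_el)
  apply (auto simp: el_def rho_lt int_rho mod3)
  done

lemma lmul_sup:
  assumes "finite Q" "lsupp X \<subseteq> Q"
  shows "lmul N X Y p j k = (\<Sum>q\<in>Q. \<Sum>l<N. X q j l * Y (p - q) l k)"
  unfolding lmul_def
proof (rule sum.mono_neutral_left[OF assms(1) assms(2)])
  show "\<forall>i\<in>Q - lsupp X. (\<Sum>l<N. X i j l * Y (p - i) l k) = 0"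
    by (auto simp: lsupp_def)
qed

lemma lpair_sup:
  assumes "finite Q" "lsupp X \<subseteq> Q"
  shows "lpair N X Y = (\<Sum>j<N. \<Sum>q\<in>Q. \<Sum>l<N. X q j l * Y (- q) l j)"
  unfolding lpair_def by (simp add: lmul_sup[OF assms])

lemma if01_mult[simp]: "(if P then 1 else 0) * (y::'a::semiring_1) = (if P then y else 0)"
  by simp
lemma mult_if01[simp]: "(y::'a::semiring_1) * (if P then 1 else 0) = (if P then y else 0)"
  by simp

lemma sum3_delta:
  assumes "finite A" "finite B" "finite C"
  shows "(\<Sum>x\<in>A. \<Sum>y\<in>B. \<Sum>z\<in>C. if x = x0 \<and> y = y0 \<and> z = z0 then f x y z else 0)
       = (if x0 \<in> A \<and> y0 \<in> B \<and> z0 \<in> C then f x0 y0 z0 else 0)"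
proof -
  have "(\<Sum>z\<in>C. if x = x0 \<and> y = y0 \<and> z = z0 then f x y z else 0)
       = (if x = x0 \<and> y = y0 then (if z0 \<in> C then f x y z0 else 0) else 0)" for x y
    using assms by (cases "x = x0 \<and> y = y0") (auto simp: sum.delta')
  hence "(\<Sum>x\<in>A. \<Sum>y\<in>B. \<Sum>z\<in>C. if x = x0 \<and> y = y0 \<and> z = z0 then f x y z else 0)
     = (\<Sum>x\<in>A. \<Sum>y\<in>B. if x = x0 \<and> y = y0 then (if z0 \<in> C then f x y z0 else 0) else 0)"
    by simp
  also have "\<dots> = (\<Sum>x\<in>A. if x = x0 then (if y0 \<in> B \<and> z0 \<in> C then f x y0 z0 else 0) else 0)"
    using assms by (intro sum.cong refl) (auto simp: sum.delta')
  also have "\<dots> = (if x0 \<in> A \<and> y0 \<in> B \<and> z0 \<in> C then f x0 y0 z0 else 0)"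
    using assms by (simp add: sum.delta')
  finally show ?thesis .
qed

lemma lpair_el_right:
  assumes N: "0 < N" and f: "finite (lsupp X)"
  shows "lpair N X (el N q a) = X (-q) (rho N (a-q)) (rho N a)"
proof -
  have "lpair N X (el N q a) = (\<Sum>j<N. \<Sum>r\<in>lsupp X \<union> {-q}. \<Sum>l<N. X r j l * el N q a (- r) l j)"
    by (rule lpair_sup) (use f in auto)
  also have "\<dots> = (\<Sum>j<N. \<Sum>r\<in>lsupp X \<union> {-q}. \<Sum>l<N. if j = rho N (a - q) \<and> r = -q \<and> l = rho N a then X r j l else 0)"
    by (intro sum.cong refl) (auto simp: el_def)
  also have "\<dots> = X (-q) (rho N (a-q)) (rho N a)"
    using f by (subst sum3_delta) (auto simp: rho_lt[OF N])
  finally show ?thesis .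
qed

lemma lpair_el_left:
  assumes N: "0 < N"
  shows "lpair N (el N q a) Y = Y (-q) (rho N (a - q)) (rho N a)"
proof -
  have "lpair N (el N q a) Y = (\<Sum>j<N. \<Sum>r\<in>{q}. \<Sum>l<N. el N q a r j l * Y (- r) l j)"
    by (rule lpair_sup) (auto simp: lsupp_el[OF N])
  also have "\<dots> = (\<Sum>j<N. \<Sum>r\<in>{q}. \<Sum>l<N. if j = rho N a \<and> r = q \<and> l = rho N (a - q) then Y (-r) l j else 0)"
    by (intro sum.cong refl) (auto simp: el_def)
  also have "\<dots> = Y (-q) (rho N (a - q)) (rho N a)"
    by (subst sum3_delta) (auto simp: rho_lt[OF N])
  finally show ?thesis .
qed

lemma gset_entry:
  assumes "X \<in> gset N" "X p j k \<noteq> 0"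
  shows "j < N \<and> k < N \<and> k = rho N (int j - p)"
proof -
  from assms have *: "j < N" "k < N" "(int j - int k - p) mod int N = 0"
    unfolding gset_def by auto
  then have "int k = (int j - p) mod int N"
    by (metis (no_types, lifting) add.commute diff_add_cancel diff_diff_eq2 diff_diff_eq mod_0
        mod_add_right_eq mod_pos_pos_trivial of_nat_0_le_iff of_nat_less_iff add_0 mod_diff_eq
        diff_zero)
  with * show ?thesis unfolding rho_def by simp
qed

lemma gset_finite: "X \<in> gset N \<Longrightarrow> finite (lsupp X)"
  unfolding gset_def by auto

lemma gset_eq:
  assumes N: "0 < N" and X: "X \<in> gset N" and Y: "Y \<in> gset N"
    and h: "\<And>q a. lpair N X (el N q a) = lpair N Y (el N q a)"
  shows "X = Y"
proof (intro ext)
  fix p j k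
  show "X p j k = Y p j k"
  proof (cases "X p j k = 0 \<and> Y p j k = 0")
    case True then show ?thesis by simp
  next
    case False
    then have pat: "j < N \<and> k < N \<and> k = rho N (int j - p)"
      using gset_entry[OF X] gset_entry[OF Y] by blast
    have e1: "rho N (int k - (- p)) = j" using pat N
      unfolding rho_def by (simp add: mod_simps nat_mod_as_int)
    have e2: "rho N (int k) = k" using pat N unfolding rho_def
      by (simp add: nat_mod_as_int)
    have "lpair N X (el N (-p) (int k)) = X p j k"
      using lpair_el_right[OF N gset_finite[OF X]] e1 e2 by simp
    moreover have "lpair N Y (el N (-p) (int k)) = Y p j k"
      using lpair_el_right[OF N gset_finite[OF Y]] e1 e2 by simp
    ultimately show ?thesis using h by metis
  qed
qed

lemma grad_unique:
  assumes N: "0 < N" and g: "has_grad N \<phi> L G"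
  shows "grad N \<phi> L = G"
  unfolding grad_def
proof (rule the_equality[where P="has_grad N \<phi> L", OF g])
  fix G' assume g': "has_grad N \<phi> L G'"
  show "G' = G"
  proof (rule gset_eq[OF N])
    show "G' \<in> gset N" "G \<in> gset N" using g g' unfolding has_grad_def by auto
    fix q a
    have M: "el N q a \<in> gset N" by (rule el_gset[OF N])
    show "lpair N G' (el N q a) = lpair N G (el N q a)"
      using g g' M unfolding has_grad_def by (meson DERIV_unique)
  qed
qed

lemma coord_lin:
  "coord N m i k (ladd L (lsmul e M)) = coord N m i k L + e * coord N m i k M"
  unfolding coord_def ladd_def lsmul_def by simp

lemma coord_grad:
  assumes N: "0 < N" and i: "0 \<le> i" "i \<le> int m"
  shows "has_grad N (coord N m i k) L (el N i (k + i))"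
  unfolding has_grad_def
proof (intro conjI ballI)
  show "el N i (k + i) \<in> gset N" by (rule el_gset[OF N])
  fix M assume "M \<in> gset N"
  have "lpair N (el N i (k + i)) M = coord N m i k M"
    using i by (simp add: lpair_el_left[OF N] coord_def rho_def)
  moreover have "((\<lambda>e. coord N m i k L + e * coord N m i k M) has_field_derivative coord N m i k M) (at 0)"
    by (auto intro!: derivative_eq_intros)
  ultimately show "((\<lambda>e. coord N m i k (ladd L (lsmul e M))) has_field_derivative lpair N (el N i (k + i)) M) (at 0)"
    by (simp add: coord_lin)
qed

definition Bform :: "nat \<Rightarrow> lmat \<Rightarrow> lmat \<Rightarrow> lmat \<Rightarrow> complex" where
  "Bform N L G H =
      1/2 * lpair N (A1op N (lmul N G L)) (lmul N H L)
    - 1/2 * lpair N (A2op N (lmul N L G)) (lmul N L H)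
    + 1/2 * lpair N (Sop N (lmul N L G)) (lmul N H L)
    - 1/2 * lpair N (Sstar N (lmul N G L)) (lmul N L H)"

lemma PB2_Bform: "PB2 N \<phi> \<psi> L = Bform N L (grad N \<phi> L) (grad N \<psi> L)"
  unfolding PB2_def Bform_def dl_def dr_def by simp

lemma GL_el:
  assumes N: "0 < N"
  shows "lmul N (el N p a) L r j k = (if j = rho N a then L (r - p) (rho N (a - p)) k else 0)"
proof -
  have "lmul N (el N p a) L r j k = (\<Sum>q\<in>{p}. \<Sum>l<N. el N p a q j l * L (r - q) l k)"
    by (rule lmul_sup) (auto simp: lsupp_el[OF N])
  also have "\<dots> = (\<Sum>l<N. if l = rho N (a - p) then (if j = rho N a then L (r - p) l k else 0) else 0)"
    by (simp add: el_def)
  also have "\<dots> = (if j = rho N a then L (r - p) (rho N (a - p)) k else 0)"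
    by (simp add: rho_lt[OF N])
  finally show ?thesis .
qed

lemma LG_el:
  assumes N: "0 < N" and f: "finite (lsupp L)"
  shows "lmul N L (el N p a) r j k = (if k = rho N (a - p) then L (r - p) j (rho N a) else 0)"
proof -
  have "lmul N L (el N p a) r j k = (\<Sum>q\<in>lsupp L \<union> {r - p}. \<Sum>l<N. L q j l * el N p a (r - q) l k)"
    by (rule lmul_sup) (use f in auto)
  also have "\<dots> = (\<Sum>q\<in>lsupp L \<union> {r - p}. if q = r - p then (\<Sum>l<N. if l = rho N a then (if k = rho N (a - p) then L q j l else 0) else 0) else 0)"
    by (intro sum.cong refl) (auto simp: el_def)
  also have "\<dots> = (if k = rho N (a - p) then L (r - p) j (rho N a) else 0)"
    using f by (simp add: rho_lt[OF N] sum.delta')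
  finally show ?thesis .
qed

lemma sum_if_const[simp]: "(\<Sum>x\<in>A. if P then f x else 0) = (if P then sum f A else 0)"
  by simp

lemma sum_delta_gen:
  assumes "finite A" "\<And>x. C x \<Longrightarrow> x = x0"
  shows "(\<Sum>x\<in>A. if C x then f x else 0) = (if x0 \<in> A \<and> C x0 then f x0 else 0)"
proof -
  have "(\<Sum>x\<in>A. if C x then f x else 0) = (\<Sum>x\<in>A. if x = x0 then (if C x0 then f x0 else 0) else 0)"
  proof (rule sum.cong[OF refl])
    fix x
    show "(if C x then f x else 0) = (if x = x0 then (if C x0 then f x0 else 0) else 0)"
    proof (cases "C x")
      case True
      then have "x = x0" by (rule assms(2))
      then show ?thesis using True by simp
    next
      case False then show ?thesis by auto
    qed
  qed
  then show ?thesis using assms(1) by (simp add: sum.delta')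
qed
lemma sum_delta_r: "finite A \<Longrightarrow> (\<Sum>x\<in>A. if P x \<and> x = x0 then f x else 0) = (if x0 \<in> A \<and> P x0 then f x0 else 0)"
  using sum_delta_gen[of A "\<lambda>x. P x \<and> x = x0" x0 f] by auto

lemma sum_delta_r2: "finite A \<Longrightarrow> (\<Sum>x\<in>A. if P x \<and> Q x \<and> x = x0 then f x else 0) = (if x0 \<in> A \<and> P x0 \<and> Q x0 then f x0 else 0)"
  using sum_delta_gen[of A "\<lambda>x. P x \<and> Q x \<and> x = x0" x0 f] by auto

lemma sum_delta_l: "finite A \<Longrightarrow> (\<Sum>x\<in>A. if x = x0 \<and> P x then f x else 0) = (if x0 \<in> A \<and> P x0 then f x0 else 0)"
  using sum_delta_gen[of A "\<lambda>x. x = x0 \<and> P x" x0 f] by auto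

lemma sum_delta_m: "finite A \<Longrightarrow> (\<Sum>x\<in>A. if P x \<and> x = x0 \<and> Q x then f x else 0) = (if x0 \<in> A \<and> P x0 \<and> Q x0 then f x0 else 0)"
  using sum_delta_gen[of A "\<lambda>x. P x \<and> x = x0 \<and> Q x" x0 f] by auto

lemmas sum_deltas[simp] = sum_delta_r sum_delta_r2 sum_delta_l sum_delta_m

lemma R0_eq: "R0 X r j l = of_int (sgn r) * X r j l"
  unfolding R0_def Ppos_def Pneg_def by (simp add: sgn_if)

lemma Wop_GL:
  assumes N: "0 < N"
  shows "Wop N (lmul N (el N p a) L) r j l =
    (if r = 0 \<and> j = l \<and> j < N then of_int (sgn (int (rho N a) - int j)) * L (-p) (rho N (a-p)) (rho N a) else 0)"
proof -
  have S: "(\<Sum>i<N. of_int (sgn (int i - int j)) * P0 (lmul N (el N p a) L) 0 i i)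
      = of_int (sgn (int (rho N a) - int j)) * L (-p) (rho N (a-p)) (rho N a)" for j
  proof -
    have "(\<Sum>i<N. of_int (sgn (int i - int j)) * P0 (lmul N (el N p a) L) 0 i i)
      = (\<Sum>i<N. if i = rho N a then of_int (sgn (int i - int j)) * L (-p) (rho N (a-p)) i else 0)"
      by (intro sum.cong refl) (simp add: P0_def GL_el[OF N])
    also have "\<dots> = of_int (sgn (int (rho N a) - int j)) * L (-p) (rho N (a-p)) (rho N a)"
      by (simp add: rho_lt[OF N])
    finally show ?thesis .
  qed
  show ?thesis unfolding Wop_def using S by auto
qed

lemma Wop_LG:
  assumes N: "0 < N" and f: "finite (lsupp L)"
  shows "Wop N (lmul N L (el N p a)) r j l =
    (if r = 0 \<and> j = l \<and> j < N then of_int (sgn (int (rho N (a-p)) - int j)) * L (-p) (rho N (a-p)) (rho N a) else 0)"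
proof -
  have S: "(\<Sum>i<N. of_int (sgn (int i - int j)) * P0 (lmul N L (el N p a)) 0 i i)
      = of_int (sgn (int (rho N (a-p)) - int j)) * L (-p) (rho N (a-p)) (rho N a)" for j
  proof -
    have "(\<Sum>i<N. of_int (sgn (int i - int j)) * P0 (lmul N L (el N p a)) 0 i i)
      = (\<Sum>i<N. if i = rho N (a-p) then of_int (sgn (int i - int j)) * L (-p) i (rho N a) else 0)"
      by (intro sum.cong refl) (simp add: P0_def LG_el[OF N f])
    also have "\<dots> = of_int (sgn (int (rho N (a-p)) - int j)) * L (-p) (rho N (a-p)) (rho N a)"
      by (simp add: rho_lt[OF N])
    finally show ?thesis .
  qed
  show ?thesis unfolding Wop_def using S by auto
qed

lemma T1:
  assumes N: "0 < N" and f: "finite (lsupp L)" and Q: "finite Q" "0 \<in> Q" "\<And>r. r - p \<in> lsupp L \<Longrightarrow> r \<in> Q"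
  shows "lpair N (A1op N (lmul N (el N p a) L)) (lmul N (el N q c) L) =
    (\<Sum>r\<in>Q. of_int (sgn r) * L (r-p) (rho N (a-p)) (rho N c) * L (-r-q) (rho N (c-q)) (rho N a))
    + of_int (sgn (int (rho N a) - int (rho N c))) * L (-p) (rho N (a-p)) (rho N a) * L (-q) (rho N (c-q)) (rho N c)" (is "_ = ?rhs")
proof -
  have sup: "lsupp (A1op N (lmul N (el N p a) L)) \<subseteq> Q"
  proof
    fix r assume "r \<in> lsupp (A1op N (lmul N (el N p a) L))"
    then obtain j l where "A1op N (lmul N (el N p a) L) r j l \<noteq> 0" unfolding lsupp_def by auto
    then have "r = 0 \<or> L (r - p) (rho N (a-p)) l \<noteq> 0"
      by (auto simp: A1op_def R0_eq GL_el[OF N] Wop_GL[OF N] split: if_splits)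
    then show "r \<in> Q" using Q unfolding lsupp_def by auto
  qed
  have "lpair N (A1op N (lmul N (el N p a) L)) (lmul N (el N q c) L) =
     (\<Sum>j<N. \<Sum>r\<in>Q. \<Sum>l<N. A1op N (lmul N (el N p a) L) r j l * lmul N (el N q c) L (- r) l j)"
    by (rule lpair_sup[OF Q(1) sup])
  also have "\<dots> = (\<Sum>j<N. \<Sum>r\<in>Q. \<Sum>l<N.
       (if j = rho N a \<and> l = rho N c then of_int (sgn r) * L (r-p) (rho N (a-p)) (rho N c) * L (-r-q) (rho N (c-q)) (rho N a) else 0)
     + (if (r = 0 \<and> j = rho N c) \<and> l = rho N c then of_int (sgn (int (rho N a) - int (rho N c))) * L (-p) (rho N (a-p)) (rho N a) * L (-q) (rho N (c-q)) (rho N c) else 0))"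
    by (intro sum.cong refl) (auto simp: A1op_def R0_eq GL_el[OF N] Wop_GL[OF N] rho_lt[OF N])
  also have "\<dots> = ?rhs"
    using Q by (simp add: sum.distrib rho_lt[OF N])
  finally show ?thesis .
qed

lemma T2:
  assumes N: "0 < N" and f: "finite (lsupp L)" and Q: "finite Q" "0 \<in> Q" "\<And>r. r - p \<in> lsupp L \<Longrightarrow> r \<in> Q"
  shows "lpair N (A2op N (lmul N L (el N p a))) (lmul N L (el N q c)) =
    (\<Sum>r\<in>Q. of_int (sgn r) * L (r-p) (rho N (c-q)) (rho N a) * L (-r-q) (rho N (a-p)) (rho N c))
    - of_int (sgn (int (rho N (a-p)) - int (rho N (c-q)))) * L (-p) (rho N (a-p)) (rho N a) * L (-q) (rho N (c-q)) (rho N c)" (is "_ = ?rhs")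
proof -
  have sup: "lsupp (A2op N (lmul N L (el N p a))) \<subseteq> Q"
  proof
    fix r assume "r \<in> lsupp (A2op N (lmul N L (el N p a)))"
    then obtain j l where "A2op N (lmul N L (el N p a)) r j l \<noteq> 0" unfolding lsupp_def by auto
    then have "r = 0 \<or> L (r - p) j (rho N a) \<noteq> 0"
      by (auto simp: A2op_def R0_eq LG_el[OF N f] Wop_LG[OF N f] split: if_splits)
    then show "r \<in> Q" using Q unfolding lsupp_def by auto
  qed
  have "lpair N (A2op N (lmul N L (el N p a))) (lmul N L (el N q c)) =
     (\<Sum>j<N. \<Sum>r\<in>Q. \<Sum>l<N. A2op N (lmul N L (el N p a)) r j l * lmul N L (el N q c) (- r) l j)"
    by (rule lpair_sup[OF Q(1) sup])
  also have "\<dots> = (\<Sum>j<N. \<Sum>r\<in>Q. \<Sum>l<N.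
       (if j = rho N (c-q) \<and> l = rho N (a-p) then of_int (sgn r) * L (r-p) (rho N (c-q)) (rho N a) * L (-r-q) (rho N (a-p)) (rho N c) else 0)
     - (if r = 0 \<and> j = rho N (c-q) \<and> l = rho N (c-q) then of_int (sgn (int (rho N (a-p)) - int (rho N (c-q)))) * L (-p) (rho N (a-p)) (rho N a) * L (-q) (rho N (c-q)) (rho N c) else 0))"
    by (intro sum.cong refl) (auto simp: A2op_def R0_eq LG_el[OF N f] Wop_LG[OF N f] rho_lt[OF N])
  also have "\<dots> = ?rhs"
    using Q by (simp add: sum_subtractf rho_lt[OF N])
  finally show ?thesis .
qed

lemma T3:
  assumes N: "0 < N" and f: "finite (lsupp L)"
  shows "lpair N (Sop N (lmul N L (el N p a))) (lmul N (el N q c) L) =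
    (if rho N c = rho N (a-p) then (\<Sum>j<N. L (-p) j (rho N a) * L (-q) (rho N (c-q)) j) else 0)
    - of_int (sgn (int (rho N (a-p)) - int (rho N c))) * L (-p) (rho N (a-p)) (rho N a) * L (-q) (rho N (c-q)) (rho N c)" (is "_ = ?rhs")
proof -
  have sup: "lsupp (Sop N (lmul N L (el N p a))) \<subseteq> {0}"
    unfolding lsupp_def Sop_def P0_def Wop_def by auto
  have "lpair N (Sop N (lmul N L (el N p a))) (lmul N (el N q c) L) =
     (\<Sum>j<N. \<Sum>r\<in>{0}. \<Sum>l<N. Sop N (lmul N L (el N p a)) r j l * lmul N (el N q c) L (- r) l j)"
    by (rule lpair_sup) (use sup in auto)
  also have "\<dots> = (\<Sum>j<N. \<Sum>r\<in>{0::int}. \<Sum>l<N.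
       (if l = rho N c \<and> rho N c = rho N (a-p) then L (-p) j (rho N a) * L (-q) (rho N (c-q)) j else 0)
     - (if j = rho N c \<and> l = rho N c then of_int (sgn (int (rho N (a-p)) - int (rho N c))) * L (-p) (rho N (a-p)) (rho N a) * L (-q) (rho N (c-q)) (rho N c) else 0))"
    by (intro sum.cong refl) (auto simp: Sop_def P0_def LG_el[OF N f] GL_el[OF N] Wop_LG[OF N f] rho_lt[OF N])
  also have "\<dots> = ?rhs"
    by (simp add: sum_subtractf rho_lt[OF N])
  finally show ?thesis .
qed

lemma T4:
  assumes N: "0 < N" and f: "finite (lsupp L)"
  shows "lpair N (Sstar N (lmul N (el N p a) L)) (lmul N L (el N q c)) =
    (if rho N a = rho N (c-q) then (\<Sum>l<N. L (-p) (rho N (a-p)) l * L (-q) l (rho N c)) else 0)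
    + of_int (sgn (int (rho N a) - int (rho N (c-q)))) * L (-p) (rho N (a-p)) (rho N a) * L (-q) (rho N (c-q)) (rho N c)" (is "_ = ?rhs")
proof -
  have sup: "lsupp (Sstar N (lmul N (el N p a) L)) \<subseteq> {0}"
    unfolding lsupp_def Sstar_def P0_def Wop_def by auto
  have "lpair N (Sstar N (lmul N (el N p a) L)) (lmul N L (el N q c)) =
     (\<Sum>j<N. \<Sum>r\<in>{0}. \<Sum>l<N. Sstar N (lmul N (el N p a) L) r j l * lmul N L (el N q c) (- r) l j)"
    by (rule lpair_sup) (use sup in auto)
  also have "\<dots> = (\<Sum>j<N. \<Sum>r\<in>{0::int}. \<Sum>l<N.
       (if j = rho N a \<and> rho N a = rho N (c-q) then L (-p) (rho N (a-p)) l * L (-q) l (rho N c) else 0)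
     + (if j = rho N (c-q) \<and> l = rho N (c-q) then of_int (sgn (int (rho N a) - int (rho N (c-q)))) * L (-p) (rho N (a-p)) (rho N a) * L (-q) (rho N (c-q)) (rho N c) else 0))"
    by (intro sum.cong refl) (auto simp: Sstar_def P0_def LG_el[OF N f] GL_el[OF N] Wop_GL[OF N] rho_lt[OF N])
  also have "\<dots> = ?rhs"
    by (simp add: sum.distrib rho_lt[OF N])
  finally show ?thesis .
qed

definition Xv :: "nat \<Rightarrow> (nat \<Rightarrow> complex) \<Rightarrow> (nat \<Rightarrow> nat \<Rightarrow> complex) \<Rightarrow> int \<Rightarrow> nat \<Rightarrow> complex" where
  "Xv m b a s u = (if s = -1 then 1 else if s = 0 then b u else if 1 \<le> s \<and> s \<le> int m then a (nat s) u else 0)"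

lemma small_eq_mod: "0 \<le> x \<Longrightarrow> x < n \<Longrightarrow> (x = z mod n) = (x mod n = z mod (n::int))"
  by simp

lemma Tmat_eq:
  assumes N: "0 < N"
  shows "Tmat N m b a d j k = (if j < N \<and> k < N \<and> int k = (int j - d) mod int N then Xv m b a (-d) j else 0)"
proof (cases "j < N \<and> k < N")
  case False then show ?thesis unfolding Tmat_def by auto
next
  case True
  then have jk: "0 \<le> int j" "int j < int N" "0 \<le> int k" "int k < int N" by auto
  have e1: "(int j = (int k + 1) mod int N) = (int k = (int j - 1) mod int N)"
  proof -
    have "(int j = (int k + 1) mod int N) = (int N dvd (int j - (int k + 1)))"
      using jk by (simp only: small_eq_mod mod_eq_dvd_iff)
    also have "\<dots> = (int N dvd (int k - (int j - 1)))"
      by (metis dvd_minus_iff minus_diff_eq diff_diff_eq2 diff_diff_eq add.commute)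
    also have "\<dots> = (int k = (int j - 1) mod int N)"
      using jk by (simp only: small_eq_mod mod_eq_dvd_iff)
    finally show ?thesis .
  qed
  have e0: "(j = k) = (int k = (int j - 0) mod int N)"
    using jk by auto
  show ?thesis
    using True e1 e0 unfolding Tmat_def Xv_def by (auto simp: algebra_simps)
qed

lemma Tmat_lsupp: "0 < N \<Longrightarrow> lsupp (Tmat N m b a) \<subseteq> {- int m..1}"
  unfolding lsupp_def by (auto simp: Tmat_eq Xv_def split: if_splits)

lemma Tmat_finite: "0 < N \<Longrightarrow> finite (lsupp (Tmat N m b a))"
  by (rule finite_subset[OF Tmat_lsupp]) auto

lemma Tm_val:
  assumes N: "0 < N"
  shows "Tmat N m b a d (rho N x) (rho N y) = (if y mod int N = (x - d) mod int N then Xv m b a (-d) (rho N x) else 0)"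
  using N by (simp add: Tmat_eq rho_lt int_rho mod_diff_left_eq)

lemma Tm_val_nat:
  assumes N: "0 < N" "t < N"
  shows "Tmat N m b a d t (rho N y) = (if y mod int N = (int t - d) mod int N then Xv m b a (-d) t else 0)"
  using N by (simp add: Tmat_eq rho_lt int_rho mod_diff_left_eq)

lemma Tm_val_nat2:
  assumes N: "0 < N" "t < N"
  shows "Tmat N m b a d (rho N x) t = (if int t mod int N = (x - d) mod int N then Xv m b a (-d) (rho N x) else 0)"
  using N by (simp add: Tmat_eq rho_lt int_rho mod_diff_left_eq)

definition sgm :: "nat \<Rightarrow> int \<Rightarrow> int \<Rightarrow> complex" where
  "sgm N x y = of_int (sgn (x mod int N - y mod int N))"

definition ddm :: "nat \<Rightarrow> int \<Rightarrow> complex" where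
  "ddm N u = (if u mod int N = 0 then 1 else 0)"

lemma sgm_rho: "0 < N \<Longrightarrow> of_int (sgn (int (rho N x) - int (rho N y))) = sgm N x y"
  by (simp add: sgm_def int_rho)

lemma modeq_dvd: "(x mod n = y mod n) = ((n::int) dvd (x - y))"
  by (rule mod_eq_dvd_iff)

lemma sum_reindex_minus:
  fixes f :: "int \<Rightarrow> 'a::comm_monoid_add"
  shows "(\<Sum>r\<in>{a..b}. f r) = (\<Sum>s\<in>{c-b..c-a}. f (c - s))"
  by (rule sum.reindex_bij_witness[of _ "\<lambda>s. c - s" "\<lambda>r. c - r"]) auto

lemma sum_reindex_plus:
  fixes f :: "int \<Rightarrow> 'a::comm_monoid_add"
  shows "(\<Sum>r\<in>{a..b}. f r) = (\<Sum>s\<in>{a+c..b+c}. f (s - c))"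
  by (rule sum.reindex_bij_witness[of _ "\<lambda>s. s - c" "\<lambda>r. r + c"]) auto

definition Wi :: "nat \<Rightarrow> int \<Rightarrow> int \<Rightarrow> int \<Rightarrow> int \<Rightarrow> int" where
  "Wi N i k j l = sgn ((k+i) mod int N - (l+j) mod int N) + sgn (k mod int N - l mod int N)
     - sgn (k mod int N - (l+j) mod int N) - sgn ((k+i) mod int N - l mod int N)
     + (if (l+j-k) mod int N = 0 then 1 else 0) - (if (l-k-i) mod int N = 0 then 1 else 0)"

definition Wcl :: "nat \<Rightarrow> int \<Rightarrow> int \<Rightarrow> int \<Rightarrow> int" where
  "Wcl N i j d = (if d = 0 then sgn (i - j) else 0)
     - (if 1 \<le> d \<and> d \<le> i then 1 + sgn (d + j - i) else 0)
     + (if 1 \<le> int N - d \<and> int N - d \<le> j then 1 + sgn (int N - d + i - j) else 0)"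

lemma mod_wrap:
  fixes x t n :: int
  assumes "0 \<le> x" "x < n" "0 \<le> t" "t \<le> n"
  shows "(x + t) mod n = (if x + t < n then x + t else x + t - n)"
proof (cases "x + t < n")
  case True then show ?thesis using assms by simp
next
  case False
  then have "(x + t) mod n = (x + t - n) mod n" by (simp add: mod_diff_right_eq[symmetric])
  also have "\<dots> = x + t - n" using assms False by (intro mod_pos_pos_trivial) auto
  finally show ?thesis using False by simp
qed

lemma mod_zero_range:
  fixes x n :: int
  assumes "0 < n" "- 2 * n < x" "x < 2 * n"
  shows "(x mod n = 0) = (x = 0 \<or> x = n \<or> x = - n)"
proof
  assume "x mod n = 0"
  then obtain q where q: "x = n * q" by auto
  with assms have "-2 < q" "q < 2"
    by (metis mult.commute mult_less_cancel_right_pos mult_minus_left mult_2_right mult.right_neutral one_add_one  mult_numeral_1_right)+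
  then have "q = 0 \<or> q = 1 \<or> q = -1" by auto
  then show "x = 0 \<or> x = n \<or> x = - n" using q by auto
qed auto

lemma modA: "(l + j - k) mod n = (l mod n + j - k mod (n::int)) mod n"
  by (metis mod_add_left_eq mod_diff_cong mod_mod_trivial)
lemma modB: "(l - k - i) mod n = (l mod n - k mod n - i) mod (n::int)"
  by (metis mod_diff_cong mod_diff_left_eq mod_diff_right_eq)
lemma modC: "(l - k) mod n = (l mod n - k mod (n::int)) mod n"
  by (metis mod_diff_eq)

lemma Wi_closed:
  assumes i: "0 \<le> i" "i \<le> int m" and j: "0 \<le> j" "j \<le> int m" and N: "2 * m + 2 \<le> N"
  shows "Wi N i k j l = Wcl N i j ((l - k) mod int N)"
proof -
  define n where "n = int N"
  have n: "2 * int m + 2 \<le> n" using N unfolding n_def by simp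
  define x where "x = k mod n"
  define y where "y = l mod n"
  have x: "0 \<le> x" "x < n" and y: "0 \<le> y" "y < n" using n unfolding x_def y_def by auto
  have e1: "(k+i) mod n = (if x + i < n then x + i else x + i - n)"
    using mod_wrap[OF x, of i] i n unfolding x_def by (simp add: mod_add_left_eq)
  have e2: "(l+j) mod n = (if y + j < n then y + j else y + j - n)"
    using mod_wrap[OF y, of j] j n unfolding y_def by (simp add: mod_add_left_eq)
  have e3: "((l+j-k) mod n = 0) = (y + j - x = 0 \<or> y + j - x = n \<or> y + j - x = - n)"
  proof -
    have "(l+j-k) mod n = (y + j - x) mod n" unfolding x_def y_def by (rule modA)
    then show ?thesis using mod_zero_range[of n "y + j - x"] x y j n by simp
  qed
  have e4: "((l-k-i) mod n = 0) = (y - x - i = 0 \<or> y - x - i = n \<or> y - x - i = - n)"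
  proof -
    have "(l-k-i) mod n = (y - x - i) mod n" unfolding x_def y_def by (rule modB)
    then show ?thesis using mod_zero_range[of n "y - x - i"] x y i n by simp
  qed
  have e5: "(l - k) mod n = (if x \<le> y then y - x else y - x + n)"
  proof -
    have "(l-k) mod n = (y - x) mod n" unfolding x_def y_def by (rule modC)
    also have "\<dots> = (if x \<le> y then y - x else y - x + n)"
    proof (cases "x \<le> y")
      case True then show ?thesis using x y by (simp add: mod_pos_pos_trivial)
    next
      case False
      have "(y - x) mod n = (y - x + n) mod n" by simp
      also have "\<dots> = y - x + n" using x y False by (intro mod_pos_pos_trivial) auto
      finally show ?thesis using False by simp
    qed
    finally show ?thesis .
  qed
  show ?thesis
    unfolding Wi_def Wcl_def n_def[symmetric] x_def[symmetric] y_def[symmetric] e1 e2 e3 e4 e5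
    using x y i j n by (simp add: sgn_if)
qed

lemma mod_wrap2:
  fixes x t n :: int
  assumes "0 \<le> x" "x < n" "- n \<le> t" "t \<le> n"
  shows "(x + t) mod n = (if x + t < 0 then x + t + n else if x + t < n then x + t else x + t - n)"
proof (cases "x + t < 0")
  case True
  have "(x + t) mod n = (x + t + n) mod n" by simp
  also have "\<dots> = x + t + n" using assms True by (intro mod_pos_pos_trivial) auto
  finally show ?thesis using True by simp
next
  case False
  then show ?thesis using mod_wrap[of x n t] assms
    by (cases "t \<ge> 0") (auto simp: mod_pos_pos_trivial)
qed

lemma Wi_jm1:
  assumes i: "-1 \<le> i" "i \<le> int m" and N: "m + 2 \<le> N"
  shows "Wi N i k (-1) l = (if (l-k-i-1) mod int N = 0 then 1 else 0) - (if (l-k) mod int N = 0 then 1 else 0)"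
proof -
  define n where "n = int N"
  have n: "int m + 2 \<le> n" using N unfolding n_def by simp
  define x where "x = k mod n"
  define y where "y = l mod n"
  have x: "0 \<le> x" "x < n" and y: "0 \<le> y" "y < n" using n unfolding x_def y_def by auto
  have e1: "(k+i) mod n = (if x + i < 0 then x + i + n else if x + i < n then x + i else x + i - n)"
    using mod_wrap2[OF x, of i] i n unfolding x_def by (simp add: mod_add_left_eq)
  have e2: "(l + -1) mod n = (if y - 1 < 0 then y - 1 + n else y - 1)"
  proof -
    have "(l + -1) mod n = (y + -1) mod n" unfolding y_def by (rule mod_add_left_eq[symmetric])
    then show ?thesis using mod_wrap2[OF y, of "-1"] n y by simp
  qed
  have e3: "((l + -1 - k) mod n = 0) = (y - 1 - x = 0 \<or> y - 1 - x = n \<or> y - 1 - x = - n)"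
  proof -
    have "(l + -1 - k) mod n = (y + -1 - x) mod n" unfolding x_def y_def by (rule modA)
    then show ?thesis using mod_zero_range[of n "y - 1 - x"] x y n by simp
  qed
  have e4: "((l-k-i) mod n = 0) = (y - x - i = 0 \<or> y - x - i = n \<or> y - x - i = - n)"
  proof -
    have "(l-k-i) mod n = (y - x - i) mod n" unfolding x_def y_def by (rule modB)
    then show ?thesis using mod_zero_range[of n "y - x - i"] x y i n by simp
  qed
  have e6: "((l-k-i-1) mod n = 0) = (y - x - (i+1) = 0 \<or> y - x - (i+1) = n \<or> y - x - (i+1) = - n)"
  proof -
    have "(l-k-(i+1)) mod n = (y - x - (i+1)) mod n" unfolding x_def y_def by (rule modB)
    then show ?thesis using mod_zero_range[of n "y - x - (i+1)"] x y i n by (simp add: algebra_simps)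
  qed
  have e7: "((l-k) mod n = 0) = (y - x = 0)"
  proof -
    have "(l-k) mod n = (y - x) mod n" unfolding x_def y_def by (rule modC)
    then show ?thesis using mod_zero_range[of n "y - x"] x y n by auto
  qed
  show ?thesis
    unfolding Wi_def n_def[symmetric] x_def[symmetric] y_def[symmetric] e1 e2 e3 e4 e6 e7
    using x y i n by (simp add: sgn_if)
qed

lemma dvd_cong_eq: "x = y \<Longrightarrow> (n dvd x) = ((n::int) dvd y)" by simp
lemma dvd_cong_neg: "x = - y \<Longrightarrow> (n dvd x) = ((n::int) dvd y)" by simp

lemma T1_pt:
  assumes N: "0 < N"
  shows "of_int (sgn (i - s)) * Tmat N m b a (i - s - i) (rho N k) (rho N (l + j)) * Tmat N m b a (- (i - s) - j) (rho N l) (rho N (k + i))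
    = (if int N dvd (l + j - k - s) then of_int (sgn (i - s)) * Xv m b a s (rho N k) * Xv m b a (i + j - s) (rho N l) else 0)"
proof -
  have c1: "((l + j) mod int N = (k - (i - s - i)) mod int N) = (int N dvd (l + j - k - s))"
    by (simp add: modeq_dvd) (rule dvd_cong_eq, simp)
  have c2: "((k + i) mod int N = (l - (- (i - s) - j)) mod int N) = (int N dvd (l + j - k - s))"
    by (simp add: modeq_dvd) (rule dvd_cong_neg, simp)
  show ?thesis
    by (simp only: Tm_val[OF N] c1 c2) (simp add: algebra_simps)
qed

lemma T2_pt:
  assumes N: "0 < N"
  shows "of_int (sgn (s - j)) * Tmat N m b a (s - j - i) (rho N l) (rho N (k + i)) * Tmat N m b a (- (s - j) - j) (rho N k) (rho N (l + j))
    = (if int N dvd (l + j - k - s) then of_int (sgn (s - j)) * Xv m b a s (rho N k) * Xv m b a (i + j - s) (rho N l) else 0)"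
proof -
  have c1: "((k + i) mod int N = (l - (s - j - i)) mod int N) = (int N dvd (l + j - k - s))"
    by (simp add: modeq_dvd) (rule dvd_cong_neg, simp)
  have c2: "((l + j) mod int N = (k - (- (s - j) - j)) mod int N) = (int N dvd (l + j - k - s))"
    by (simp add: modeq_dvd) (rule dvd_cong_eq, simp)
  show ?thesis
    by (simp only: Tm_val[OF N] c1 c2) (simp add: algebra_simps)
qed

lemma T1_clean:
  assumes N: "0 < N"
  shows "lpair N (A1op N (lmul N (el N i (k+i)) (Tmat N m b a))) (lmul N (el N j (l+j)) (Tmat N m b a)) =
    (\<Sum>s\<in>{-1..int m}. if int N dvd (l + j - k - s) then of_int (sgn (i - s)) * Xv m b a s (rho N k) * Xv m b a (i + j - s) (rho N l) else 0)
    + sgm N (k+i) (l+j) * Xv m b a i (rho N k) * Xv m b a j (rho N l)"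
proof -
  let ?L = "Tmat N m b a"
  let ?F = "\<lambda>r. of_int (sgn r) * ?L (r-i) (rho N k) (rho N (l+j)) * ?L (-r-j) (rho N l) (rho N (k+i))"
  have QQ: "\<And>r. r - i \<in> lsupp ?L \<Longrightarrow> r \<in> {i - int m..i+1} \<union> {0}"
    using Tmat_lsupp[OF N] by fastforce
  have "lpair N (A1op N (lmul N (el N i (k+i)) ?L)) (lmul N (el N j (l+j)) ?L) =
     (\<Sum>r\<in>{i - int m..i+1} \<union> {0}. ?F r)
     + of_int (sgn (int (rho N (k+i)) - int (rho N (l+j)))) * ?L (-i) (rho N k) (rho N (k+i)) * ?L (-j) (rho N l) (rho N (l+j))"
    using T1[where Q="{i - int m..i+1} \<union> {0}" and p=i and a="k+i" and q=j and c="l+j", OF N Tmat_finite[OF N]] QQ by simp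
  also have "(\<Sum>r\<in>{i - int m..i+1} \<union> {0}. ?F r) = (\<Sum>r\<in>{i - int m..i+1}. ?F r)"
    by (rule sum.mono_neutral_right) auto
  also have "\<dots> = (\<Sum>s\<in>{-1..int m}. ?F (i - s))"
    by (subst sum_reindex_minus[where c=i]) simp
  also have "\<dots> = (\<Sum>s\<in>{-1..int m}. if int N dvd (l + j - k - s) then of_int (sgn (i - s)) * Xv m b a s (rho N k) * Xv m b a (i + j - s) (rho N l) else 0)"
    by (intro sum.cong refl) (rule T1_pt[OF N])
  also have "?L (-i) (rho N k) (rho N (k+i)) = Xv m b a i (rho N k)"
    by (simp add: Tm_val[OF N])
  also have "?L (-j) (rho N l) (rho N (l+j)) = Xv m b a j (rho N l)"
    by (simp add: Tm_val[OF N])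
  finally show ?thesis by (simp add: sgm_rho[OF N])
qed

lemma Tmat_zero: "0 < N \<Longrightarrow> d \<notin> {- int m..1} \<Longrightarrow> Tmat N m b a d x y = 0"
  by (auto simp: Tmat_eq Xv_def)

lemma T2_clean:
  assumes N: "0 < N"
  shows "lpair N (A2op N (lmul N (Tmat N m b a) (el N i (k+i)))) (lmul N (Tmat N m b a) (el N j (l+j))) =
    (\<Sum>s\<in>{-1..int m}. if int N dvd (l + j - k - s) then of_int (sgn (s - j)) * Xv m b a s (rho N k) * Xv m b a (i + j - s) (rho N l) else 0)
    - sgm N k l * Xv m b a i (rho N k) * Xv m b a j (rho N l)"
proof -
  let ?L = "Tmat N m b a"
  let ?Q = "{-1-j..int m-j} \<union> {i - int m..i+1} \<union> {0}"
  let ?F = "\<lambda>r. of_int (sgn r) * ?L (r-i) (rho N l) (rho N (k+i)) * ?L (-r-j) (rho N k) (rho N (l+j))"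
  have QQ: "\<And>r. r - i \<in> lsupp ?L \<Longrightarrow> r \<in> ?Q"
    using Tmat_lsupp[OF N] by fastforce
  have "lpair N (A2op N (lmul N ?L (el N i (k+i)))) (lmul N ?L (el N j (l+j))) =
     (\<Sum>r\<in>?Q. ?F r)
     - of_int (sgn (int (rho N k) - int (rho N l))) * ?L (-i) (rho N k) (rho N (k+i)) * ?L (-j) (rho N l) (rho N (l+j))"
    using T2[where Q="?Q" and p=i and a="k+i" and q=j and c="l+j", OF N Tmat_finite[OF N]] QQ by simp
  also have "(\<Sum>r\<in>?Q. ?F r) = (\<Sum>r\<in>{-1-j..int m-j}. ?F r)"
  proof (rule sum.mono_neutral_right)
    show "\<forall>r\<in>?Q - {-1-j..int m-j}. ?F r = 0"
    proof
      fix r assume "r \<in> ?Q - {-1-j..int m-j}"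
      then have "-r-j \<notin> {- int m..1}" by auto
      then show "?F r = 0" using Tmat_zero[OF N] by simp
    qed
  qed auto
  also have "\<dots> = (\<Sum>s\<in>{-1..int m}. ?F (s - j))"
    by (subst sum_reindex_plus[where c=j]) simp
  also have "\<dots> = (\<Sum>s\<in>{-1..int m}. if int N dvd (l + j - k - s) then of_int (sgn (s - j)) * Xv m b a s (rho N k) * Xv m b a (i + j - s) (rho N l) else 0)"
    by (intro sum.cong refl) (rule T2_pt[OF N])
  also have "?L (-i) (rho N k) (rho N (k+i)) = Xv m b a i (rho N k)"
    by (simp add: Tm_val[OF N])
  also have "?L (-j) (rho N l) (rho N (l+j)) = Xv m b a j (rho N l)"
    by (simp add: Tm_val[OF N])
  finally show ?thesis by (simp add: sgm_rho[OF N])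
qed

lemma rho_nat_eq: "0 < N \<Longrightarrow> t < N \<Longrightarrow> (int t mod int N = y mod int N) = (t = rho N y)"
  by (metis int_rho mod_pos_pos_trivial nat_int of_nat_0_le_iff of_nat_less_iff)

lemma rho_nat_eq2: "0 < N \<Longrightarrow> t < N \<Longrightarrow> (int t = y mod int N) = (t = rho N y)"
  by (metis int_rho nat_int)

lemma T3_clean:
  assumes N: "0 < N"
  shows "lpair N (Sop N (lmul N (Tmat N m b a) (el N i (k+i)))) (lmul N (el N j (l+j)) (Tmat N m b a)) =
    ddm N (l + j - k) * Xv m b a i (rho N k) * Xv m b a j (rho N l)
    - sgm N k (l+j) * Xv m b a i (rho N k) * Xv m b a j (rho N l)"
proof -
  let ?L = "Tmat N m b a"
  have dd: "ddm N (l + j - k) = (if rho N (l+j) = rho N k then 1 else 0)"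
    using N by (simp add: ddm_def rho_eq_iff modeq_dvd dvd_eq_mod_eq_0[symmetric])
  have S: "(if rho N (l+j) = rho N k then (\<Sum>t<N. ?L (-i) t (rho N (k+i)) * ?L (-j) (rho N l) t) else 0)
     = ddm N (l + j - k) * Xv m b a i (rho N k) * Xv m b a j (rho N l)"
  proof (cases "rho N (l+j) = rho N k")
    case True
    have "(\<Sum>t<N. ?L (-i) t (rho N (k+i)) * ?L (-j) (rho N l) t)
        = (\<Sum>t<N. if t = rho N (l+j) then ?L (-i) (rho N (l+j)) (rho N (k+i)) * ?L (-j) (rho N l) (rho N (l+j)) else 0)"
    proof (intro sum.cong refl)
      fix t assume t: "t \<in> {..<N}"
      show "?L (-i) t (rho N (k+i)) * ?L (-j) (rho N l) t = (if t = rho N (l+j) then ?L (-i) (rho N (l+j)) (rho N (k+i)) * ?L (-j) (rho N l) (rho N (l+j)) else 0)"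
        using t by (auto simp: Tm_val_nat2[OF N] rho_nat_eq[OF N] rho_nat_eq2[OF N])
    qed
    also have "\<dots> = ?L (-i) (rho N k) (rho N (k+i)) * ?L (-j) (rho N l) (rho N (l+j))"
      using True by (simp add: rho_lt[OF N])
    also have "\<dots> = Xv m b a i (rho N k) * Xv m b a j (rho N l)"
      by (simp add: Tm_val[OF N])
    finally show ?thesis using True dd by simp
  next
    case False
    then show ?thesis using dd by simp
  qed
  have I: "lpair N (Sop N (lmul N ?L (el N i (k+i)))) (lmul N (el N j (l+j)) ?L) =
     (if rho N (l+j) = rho N k then (\<Sum>t<N. ?L (-i) t (rho N (k+i)) * ?L (-j) (rho N l) t) else 0)
     - sgm N k (l+j) * ?L (-i) (rho N k) (rho N (k+i)) * ?L (-j) (rho N l) (rho N (l+j))"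
    using T3[where p=i and a="k+i" and q=j and c="l+j" and L="Tmat N m b a", OF N Tmat_finite[OF N]]
    by (simp add: sgm_rho[OF N])
  show ?thesis unfolding I S by (simp add: Tm_val[OF N])
qed

lemma T4_clean:
  assumes N: "0 < N"
  shows "lpair N (Sstar N (lmul N (el N i (k+i)) (Tmat N m b a))) (lmul N (Tmat N m b a) (el N j (l+j))) =
    ddm N (l - k - i) * Xv m b a i (rho N k) * Xv m b a j (rho N l)
    + sgm N (k+i) l * Xv m b a i (rho N k) * Xv m b a j (rho N l)"
proof -
  let ?L = "Tmat N m b a"
  have dd: "ddm N (l - k - i) = (if rho N (k+i) = rho N l then 1 else 0)"
  proof -
    have "(int N dvd (l - k - i)) = (int N dvd (k + i - l))" by (rule dvd_cong_neg) simp
    then show ?thesis using N by (simp add: ddm_def rho_eq_iff modeq_dvd dvd_eq_mod_eq_0[symmetric])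
  qed
  have S: "(if rho N (k+i) = rho N l then (\<Sum>t<N. ?L (-i) (rho N k) t * ?L (-j) t (rho N (l+j))) else 0)
     = ddm N (l - k - i) * Xv m b a i (rho N k) * Xv m b a j (rho N l)"
  proof (cases "rho N (k+i) = rho N l")
    case True
    have "(\<Sum>t<N. ?L (-i) (rho N k) t * ?L (-j) t (rho N (l+j)))
        = (\<Sum>t<N. if t = rho N (k+i) then ?L (-i) (rho N k) (rho N (k+i)) * ?L (-j) (rho N (k+i)) (rho N (l+j)) else 0)"
    proof (intro sum.cong refl)
      fix t assume t: "t \<in> {..<N}"
      show "?L (-i) (rho N k) t * ?L (-j) t (rho N (l+j)) = (if t = rho N (k+i) then ?L (-i) (rho N k) (rho N (k+i)) * ?L (-j) (rho N (k+i)) (rho N (l+j)) else 0)"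
        using t by (auto simp: Tm_val_nat2[OF N] rho_nat_eq[OF N] rho_nat_eq2[OF N])
    qed
    also have "\<dots> = ?L (-i) (rho N k) (rho N (k+i)) * ?L (-j) (rho N l) (rho N (l+j))"
      using True by (simp add: rho_lt[OF N])
    also have "\<dots> = Xv m b a i (rho N k) * Xv m b a j (rho N l)"
      by (simp add: Tm_val[OF N])
    finally show ?thesis using True dd by simp
  next
    case False
    then show ?thesis using dd by simp
  qed
  have I: "lpair N (Sstar N (lmul N (el N i (k+i)) ?L)) (lmul N ?L (el N j (l+j))) =
     (if rho N (k+i) = rho N l then (\<Sum>t<N. ?L (-i) (rho N k) t * ?L (-j) t (rho N (l+j))) else 0)
     + sgm N (k+i) l * ?L (-i) (rho N k) (rho N (k+i)) * ?L (-j) (rho N l) (rho N (l+j))"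
    using T4[where p=i and a="k+i" and q=j and c="l+j" and L="Tmat N m b a", OF N Tmat_finite[OF N]]
    by (simp add: sgm_rho[OF N])
  show ?thesis unfolding I S by (simp add: Tm_val[OF N])
qed

definition Fsum :: "nat \<Rightarrow> nat \<Rightarrow> (nat \<Rightarrow> complex) \<Rightarrow> (nat \<Rightarrow> nat \<Rightarrow> complex) \<Rightarrow> int \<Rightarrow> int \<Rightarrow> int \<Rightarrow> int \<Rightarrow> complex" where
  "Fsum N m b a i k j l = (\<Sum>s\<in>{-1..int m}. if int N dvd (l + j - k - s)
      then (of_int (sgn (i - s)) + of_int (sgn (j - s))) * Xv m b a s (rho N k) * Xv m b a (i + j - s) (rho N l) else 0)"

definition Wc :: "nat \<Rightarrow> int \<Rightarrow> int \<Rightarrow> int \<Rightarrow> int \<Rightarrow> complex" where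
  "Wc N i k j l = sgm N (k+i) (l+j) + sgm N k l - sgm N k (l+j) - sgm N (k+i) l + ddm N (l+j-k) - ddm N (l-k-i)"

lemma Bform_el:
  assumes N: "0 < N"
  shows "2 * Bform N (Tmat N m b a) (el N i (k+i)) (el N j (l+j)) =
    Fsum N m b a i k j l + Xv m b a i (rho N k) * Xv m b a j (rho N l) * Wc N i k j l"
proof -
  have sg: "of_int (sgn (s - j)) = - (of_int (sgn (j - s)) :: complex)" for s
    by (simp add: sgn_if)
  have "(\<Sum>s\<in>{-1..int m}. if int N dvd (l + j - k - s) then of_int (sgn (i - s)) * Xv m b a s (rho N k) * Xv m b a (i + j - s) (rho N l) else 0)
      - (\<Sum>s\<in>{-1..int m}. if int N dvd (l + j - k - s) then of_int (sgn (s - j)) * Xv m b a s (rho N k) * Xv m b a (i + j - s) (rho N l) else 0)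
      = Fsum N m b a i k j l"
    unfolding Fsum_def sum_subtractf[symmetric]
    by (intro sum.cong refl) (simp add: sg algebra_simps)
  then have h: "Fsum N m b a i k j l = (\<Sum>s\<in>{-1..int m}. if int N dvd (l + j - k - s) then of_int (sgn (i - s)) * Xv m b a s (rho N k) * Xv m b a (i + j - s) (rho N l) else 0)
      - (\<Sum>s\<in>{-1..int m}. if int N dvd (l + j - k - s) then of_int (sgn (s - j)) * Xv m b a s (rho N k) * Xv m b a (i + j - s) (rho N l) else 0)" by simp
  have "2 * Bform N (Tmat N m b a) (el N i (k+i)) (el N j (l+j)) =
     lpair N (A1op N (lmul N (el N i (k+i)) (Tmat N m b a))) (lmul N (el N j (l+j)) (Tmat N m b a))
   - lpair N (A2op N (lmul N (Tmat N m b a) (el N i (k+i)))) (lmul N (Tmat N m b a) (el N j (l+j)))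
   + lpair N (Sop N (lmul N (Tmat N m b a) (el N i (k+i)))) (lmul N (el N j (l+j)) (Tmat N m b a))
   - lpair N (Sstar N (lmul N (el N i (k+i)) (Tmat N m b a))) (lmul N (Tmat N m b a) (el N j (l+j)))"
    unfolding Bform_def by (simp add: algebra_simps)
  also have "\<dots> = Fsum N m b a i k j l + Xv m b a i (rho N k) * Xv m b a j (rho N l) * Wc N i k j l"
    unfolding T1_clean[OF N] T2_clean[OF N] T3_clean[OF N] T4_clean[OF N] h Wc_def
    by (simp add: algebra_simps)
  finally show ?thesis .
qed

lemma Wc_Wi: "Wc N i k j l = of_int (Wi N i k j l)"
  unfolding Wc_def Wi_def sgm_def ddm_def by simp

lemma Xv_nz: "Xv m b a s u \<noteq> 0 \<Longrightarrow> -1 \<le> s \<and> s \<le> int m"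
  unfolding Xv_def by (auto split: if_splits)

lemma Xv_m1[simp]: "Xv m b a (-1) u = 1"
  unfolding Xv_def by simp

lemma sum_two:
  assumes "finite S" "x \<in> S" "y \<in> S" "x \<noteq> y" "\<And>s. s \<in> S \<Longrightarrow> s \<noteq> x \<Longrightarrow> s \<noteq> y \<Longrightarrow> g s = 0"
  shows "sum g S = g x + g y"
proof -
  have "sum g S = sum g {x, y}"
    using assms by (intro sum.mono_neutral_right) auto
  then show ?thesis using assms by simp
qed

lemma dvd_mod0: "(int N dvd x) = (x mod int N = 0)"
  by (simp add: dvd_eq_mod_eq_0)

lemma Fsum_zero_termwise:
  assumes "\<And>s. -1 \<le> s \<Longrightarrow> s \<le> int m \<Longrightarrow> Xv m b a s (rho N k) \<noteq> 0 \<Longrightarrow> Xv m b a (i + j - s) (rho N l) \<noteq> 0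
     \<Longrightarrow> (of_int (sgn (i - s)) + of_int (sgn (j - s)) :: complex) = 0"
  shows "Fsum N m b a i k j l = 0"
  unfolding Fsum_def
proof (rule sum.neutral, rule ballI)
  fix s assume s: "s \<in> {-1..int m}"
  show "(if int N dvd (l + j - k - s)
      then (of_int (sgn (i - s)) + of_int (sgn (j - s))) * Xv m b a s (rho N k) * Xv m b a (i + j - s) (rho N l) else 0) = 0"
    using assms[of s] s by (cases "Xv m b a s (rho N k) = 0 \<or> Xv m b a (i + j - s) (rho N l) = 0") auto
qed

lemma tang_el:
  assumes N: "0 < N" and Nm: "2 * m + 2 \<le> N" and j: "j \<notin> {0..int m}"
  shows "Bform N (Tmat N m b a) (el N i (k+i)) (el N j (l+j)) = 0"
proof -
  let ?X = "\<lambda>s u. Xv m b a s (rho N u)"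
  have "Fsum N m b a i k j l + ?X i k * ?X j l * Wc N i k j l = 0"
  proof (cases "j = -1")
    case False
    then have jj: "j > int m \<or> j < -1" using j by auto
    have Xj: "?X j l = 0" using jj Xv_nz by fastforce
    have "Fsum N m b a i k j l = 0"
    proof (rule Fsum_zero_termwise)
      fix s assume s: "-1 \<le> s" "s \<le> int m" and nz: "?X (i + j - s) l \<noteq> 0"
      from Xv_nz[OF nz] have "-1 \<le> i + j - s" "i + j - s \<le> int m" by auto
      then show "(of_int (sgn (i - s)) + of_int (sgn (j - s)) :: complex) = 0"
        using jj s by (auto simp: sgn_if)
    qed
    then show ?thesis using Xj by simp
  next
    case jm1: True
    show ?thesis
    proof (cases "0 \<le> i \<and> i \<le> int m")
      case True
      let ?g = "\<lambda>s. if int N dvd (l + j - k - s)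
          then (of_int (sgn (i - s)) + of_int (sgn (j - s))) * ?X s k * ?X (i + j - s) l else 0"
      have F: "Fsum N m b a i k j l = ?g (-1) + ?g i"
        unfolding Fsum_def
      proof (rule sum_two)
        fix s assume s: "s \<in> {-1..int m}" "s \<noteq> -1" "s \<noteq> i"
        show "?g s = 0"
        proof (cases "s < i")
          case True then show ?thesis using jm1 s by (auto simp: sgn_if)
        next
          case False
          then have "i + j - s < -1" using jm1 s by auto
          then have "?X (i + j - s) l = 0" using Xv_nz by fastforce
          then show ?thesis by simp
        qed
      qed (use True in auto)
      have W: "Wc N i k j l = (if (l-k-i-1) mod int N = 0 then 1 else 0) - (if (l-k) mod int N = 0 then 1 else 0)"
        unfolding Wc_Wi jm1 using Wi_jm1[of i m N k l] True Nm by simp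
      have e: "int N dvd (l - k) \<Longrightarrow> ?X i l = ?X i k"
      proof -
        assume "int N dvd (l - k)"
        then have "rho N l = rho N k" using N by (simp add: rho_eq_iff[OF N] modeq_dvd)
        then show ?thesis by simp
      qed
      show ?thesis unfolding F W using True jm1 e
        by (auto simp: sgn_if dvd_mod0 algebra_simps)
    next
      case False
      have "Fsum N m b a i k j l = 0"
      proof (rule Fsum_zero_termwise)
        fix s assume s: "-1 \<le> s" "s \<le> int m" and nz: "?X (i + j - s) l \<noteq> 0"
        from Xv_nz[OF nz] have "-1 \<le> i + j - s" "i + j - s \<le> int m" by auto
        then show "(of_int (sgn (i - s)) + of_int (sgn (j - s)) :: complex) = 0"
          using False jm1 s by (auto simp: sgn_if)
      qed
      moreover have "?X i k * Wc N i k j l = 0"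
      proof (cases "i = -1")
        case True
        then show ?thesis unfolding Wc_Wi jm1 using Wi_jm1[of i m N k l] Nm by simp
      next
        case False
        then have "?X i k = 0" using \<open>\<not> (0 \<le> i \<and> i \<le> int m)\<close> Xv_nz by fastforce
        then show ?thesis by simp
      qed
      ultimately show ?thesis by auto
    qed
  qed
  then show ?thesis using Bform_el[OF N, of m b a i k j l] by simp
qed

definition lsum :: "'x set \<Rightarrow> ('x \<Rightarrow> lmat) \<Rightarrow> lmat" where
  "lsum S F = (\<lambda>p j k. \<Sum>x\<in>S. F x p j k)"

abbreviation fin :: "lmat \<Rightarrow> bool" where "fin X \<equiv> finite (lsupp X)"

definition linf :: "(lmat \<Rightarrow> complex) \<Rightarrow> bool" where
  "linf f \<longleftrightarrow> (\<forall>X Y. fin X \<longrightarrow> fin Y \<longrightarrow> f (ladd X Y) = f X + f Y) \<and> (\<forall>c X. fin X \<longrightarrow> f (lsmul c X) = c * f X)"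

lemma lsupp_ladd: "lsupp (ladd X Y) \<subseteq> lsupp X \<union> lsupp Y"
  unfolding lsupp_def ladd_def by (auto, metis add.right_neutral)

lemma lsupp_lsmul: "lsupp (lsmul c X) \<subseteq> lsupp X"
  unfolding lsupp_def lsmul_def by auto

lemma fin_ladd: "fin X \<Longrightarrow> fin Y \<Longrightarrow> fin (ladd X Y)"
  by (rule finite_subset[OF lsupp_ladd]) auto

lemma fin_lsmul: "fin X \<Longrightarrow> fin (lsmul c X)"
  by (rule finite_subset[OF lsupp_lsmul])

lemma lsupp_lsum: "lsupp (lsum S F) \<subseteq> (\<Union>x\<in>S. lsupp (F x))"
proof
  fix p assume "p \<in> lsupp (lsum S F)"
  then obtain j k where "(\<Sum>x\<in>S. F x p j k) \<noteq> 0" unfolding lsupp_def lsum_def by auto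
  then obtain x where "x \<in> S" "F x p j k \<noteq> 0" by (meson sum.not_neutral_contains_not_neutral)
  then show "p \<in> (\<Union>x\<in>S. lsupp (F x))" unfolding lsupp_def by auto
qed

lemma fin_lsum: "finite S \<Longrightarrow> (\<And>x. x \<in> S \<Longrightarrow> fin (F x)) \<Longrightarrow> fin (lsum S F)"
  by (rule finite_subset[OF lsupp_lsum]) auto

lemma lsum_insert: "finite S \<Longrightarrow> x \<notin> S \<Longrightarrow> lsum (insert x S) F = ladd (F x) (lsum S F)"
  unfolding lsum_def ladd_def by simp

lemma linf_zero:
  assumes "linf f" shows "f (\<lambda>p j k. 0) = 0"
proof -
  have "fin (\<lambda>p j k. 0)" unfolding lsupp_def by simp
  then have "f (lsmul 0 (\<lambda>p j k. 0)) = 0 * f (\<lambda>p j k. 0)" using assms unfolding linf_def by blast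
  moreover have "lsmul 0 (\<lambda>p j k. 0) = (\<lambda>p j k. 0)" unfolding lsmul_def by simp
  ultimately show ?thesis by simp
qed

lemma linf_lsum:
  assumes f: "linf f" and S: "finite S" and F: "\<And>x. x \<in> S \<Longrightarrow> fin (F x)"
  shows "f (lsum S F) = (\<Sum>x\<in>S. f (F x))"
  using S F
proof (induction S rule: finite_induct)
  case empty
  have "lsum {} F = (\<lambda>p j k. 0)" unfolding lsum_def by simp
  then show ?case using linf_zero[OF f] by simp
next
  case (insert x S)
  have "f (lsum (insert x S) F) = f (ladd (F x) (lsum S F))" using insert by (simp add: lsum_insert)
  also have "\<dots> = f (F x) + f (lsum S F)"
    using f insert fin_lsum[of S F] unfolding linf_def by auto
  finally show ?case using insert by simp
qed

lemma el_rho_nat: "0 < N \<Longrightarrow> u < N \<Longrightarrow> rho N (int u) = u"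
  unfolding rho_def by simp

lemma expansion:
  assumes N: "0 < N" and H: "H \<in> gset N"
  shows "H = lsum (lsupp H \<times> {..<N}) (\<lambda>(q,u). lsmul (H q u (rho N (int u - q))) (el N q (int u)))"
proof (intro ext)
  fix p j k
  have "lsum (lsupp H \<times> {..<N}) (\<lambda>(q,u). lsmul (H q u (rho N (int u - q))) (el N q (int u))) p j k
     = (\<Sum>x\<in>lsupp H \<times> {..<N}. if x = (p, j) then (if k = rho N (int j - p) then H p j (rho N (int j - p)) else 0) else 0)"
    unfolding lsum_def
  proof (intro sum.cong refl)
    fix x assume "x \<in> lsupp H \<times> {..<N}"
    then obtain q u where x: "x = (q, u)" "u < N" by auto
    show "(case x of (q, u) \<Rightarrow> lsmul (H q u (rho N (int u - q))) (el N q (int u))) p j k =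
      (if x = (p, j) then (if k = rho N (int j - p) then H p j (rho N (int j - p)) else 0) else 0)"
      using x N by (auto simp: lsmul_def el_def el_rho_nat)
  qed
  also have "\<dots> = (if (p, j) \<in> lsupp H \<times> {..<N} then (if k = rho N (int j - p) then H p j (rho N (int j - p)) else 0) else 0)"
    using gset_finite[OF H] by (simp add: sum.delta')
  also have "\<dots> = H p j k"
  proof (cases "H p j k = 0")
    case True then show ?thesis by auto
  next
    case False
    from gset_entry[OF H False] have "j < N" "k = rho N (int j - p)" by auto
    moreover have "p \<in> lsupp H" using False unfolding lsupp_def by auto
    ultimately show ?thesis by simp
  qed
  finally show "H p j k = lsum (lsupp H \<times> {..<N}) (\<lambda>(q,u). lsmul (H q u (rho N (int u - q))) (el N q (int u))) p j k" by simp
qed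

lemma linf_expand:
  assumes f: "linf f" and N: "0 < N" and H: "H \<in> gset N"
  shows "f H = (\<Sum>(q,u)\<in>lsupp H \<times> {..<N}. H q u (rho N (int u - q)) * f (el N q (int u)))"
proof -
  have "f H = f (lsum (lsupp H \<times> {..<N}) (\<lambda>(q,u). lsmul (H q u (rho N (int u - q))) (el N q (int u))))"
    using expansion[OF N H] by simp
  also have "\<dots> = (\<Sum>x\<in>lsupp H \<times> {..<N}. f ((\<lambda>(q,u). lsmul (H q u (rho N (int u - q))) (el N q (int u))) x))"
    using gset_finite[OF H] lsupp_el[OF N]
    by (intro linf_lsum[OF f]) (auto intro!: fin_lsmul)
  also have "\<dots> = (\<Sum>(q,u)\<in>lsupp H \<times> {..<N}. H q u (rho N (int u - q)) * f (el N q (int u)))"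
    using f lsupp_el[OF N] unfolding linf_def by (intro sum.cong refl) auto
  finally show ?thesis .
qed


lemma lmul_ladd1:
  assumes "fin X" "fin Y"
  shows "lmul N (ladd X Y) Z = ladd (lmul N X Z) (lmul N Y Z)"
proof (intro ext)
  fix p j k
  let ?Q = "lsupp X \<union> lsupp Y"
  have "lmul N (ladd X Y) Z p j k = (\<Sum>q\<in>?Q. \<Sum>l<N. ladd X Y q j l * Z (p - q) l k)"
    using assms lsupp_ladd by (intro lmul_sup) auto
  also have "\<dots> = (\<Sum>q\<in>?Q. \<Sum>l<N. X q j l * Z (p - q) l k) + (\<Sum>q\<in>?Q. \<Sum>l<N. Y q j l * Z (p - q) l k)"
    by (simp add: ladd_def distrib_right sum.distrib)
  also have "\<dots> = lmul N X Z p j k + lmul N Y Z p j k"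
    using assms by (simp add: lmul_sup[of ?Q])
  finally show "lmul N (ladd X Y) Z p j k = ladd (lmul N X Z) (lmul N Y Z) p j k" by (simp add: ladd_def)
qed

lemma lmul_lsmul1:
  assumes "fin X"
  shows "lmul N (lsmul c X) Z = lsmul c (lmul N X Z)"
proof (intro ext)
  fix p j k
  have "lmul N (lsmul c X) Z p j k = (\<Sum>q\<in>lsupp X. \<Sum>l<N. lsmul c X q j l * Z (p - q) l k)"
    using assms lsupp_lsmul by (intro lmul_sup) auto
  also have "\<dots> = c * lmul N X Z p j k"
    by (simp add: lsmul_def lmul_def sum_distrib_left mult.assoc)
  finally show "lmul N (lsmul c X) Z p j k = lsmul c (lmul N X Z) p j k" by (simp add: lsmul_def)
qed

lemma lmul_ladd2: "lmul N X (ladd Y Z) = ladd (lmul N X Y) (lmul N X Z)"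
  unfolding lmul_def ladd_def by (simp add: distrib_left sum.distrib)

lemma lmul_lsmul2: "lmul N X (lsmul c Y) = lsmul c (lmul N X Y)"
  unfolding lmul_def lsmul_def by (simp add: sum_distrib_left algebra_simps)

lemma ladd_apply: "ladd X Y p j k = X p j k + Y p j k" unfolding ladd_def by simp
lemma lsmul_apply: "lsmul c X p j k = c * X p j k" unfolding lsmul_def by simp

lemma lpair_ladd1: "fin X \<Longrightarrow> fin Y \<Longrightarrow> lpair N (ladd X Y) Z = lpair N X Z + lpair N Y Z"
  unfolding lpair_def by (simp add: lmul_ladd1 ladd_apply sum.distrib)

lemma lpair_lsmul1: "fin X \<Longrightarrow> lpair N (lsmul c X) Z = c * lpair N X Z"
  unfolding lpair_def by (simp add: lmul_lsmul1 lsmul_apply sum_distrib_left)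

lemma lpair_ladd2: "lpair N X (ladd Y Z) = lpair N X Y + lpair N X Z"
  unfolding lpair_def by (simp add: lmul_ladd2 ladd_apply sum.distrib)

lemma lpair_lsmul2: "lpair N X (lsmul c Y) = c * lpair N X Y"
  unfolding lpair_def by (simp add: lmul_lsmul2 lsmul_apply sum_distrib_left)

lemma Wop_ladd: "Wop N (ladd X Y) p j k = Wop N X p j k + Wop N Y p j k"
  unfolding Wop_def P0_def by (simp add: ladd_apply distrib_left sum.distrib)

lemma Wop_lsmul: "Wop N (lsmul c X) p j k = c * Wop N X p j k"
  unfolding Wop_def P0_def by (simp add: lsmul_apply sum_distrib_left algebra_simps)

lemma R0_ladd: "R0 (ladd X Y) p j k = R0 X p j k + R0 Y p j k"
  unfolding R0_def Ppos_def Pneg_def by (simp add: ladd_apply)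

lemma R0_lsmul: "R0 (lsmul c X) p j k = c * R0 X p j k"
  unfolding R0_def Ppos_def Pneg_def by (simp add: lsmul_apply algebra_simps)

lemma P0_ladd: "P0 (ladd X Y) p j k = P0 X p j k + P0 Y p j k"
  unfolding P0_def by (simp add: ladd_apply)

lemma P0_lsmul: "P0 (lsmul c X) p j k = c * P0 X p j k"
  unfolding P0_def by (simp add: lsmul_apply)

lemma ops_ladd:
  "A1op N (ladd X Y) = ladd (A1op N X) (A1op N Y)"
  "A2op N (ladd X Y) = ladd (A2op N X) (A2op N Y)"
  "Sop N (ladd X Y) = ladd (Sop N X) (Sop N Y)"
  "Sstar N (ladd X Y) = ladd (Sstar N X) (Sstar N Y)"
  by (auto intro!: ext simp: A1op_def A2op_def Sop_def Sstar_def Wop_ladd R0_ladd P0_ladd ladd_apply)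

lemma ops_lsmul:
  "A1op N (lsmul c X) = lsmul c (A1op N X)"
  "A2op N (lsmul c X) = lsmul c (A2op N X)"
  "Sop N (lsmul c X) = lsmul c (Sop N X)"
  "Sstar N (lsmul c X) = lsmul c (Sstar N X)"
  by (auto intro!: ext simp: A1op_def A2op_def Sop_def Sstar_def Wop_lsmul R0_lsmul P0_lsmul lsmul_apply algebra_simps)

lemma lsupp_lmul: "lsupp (lmul N X Y) \<subseteq> (\<lambda>(a,b). a + b) ` (lsupp X \<times> lsupp Y)"
proof
  fix r assume "r \<in> lsupp (lmul N X Y)"
  then obtain j k where "(\<Sum>q\<in>lsupp X. \<Sum>l<N. X q j l * Y (r - q) l k) \<noteq> 0"
    unfolding lsupp_def lmul_def by auto
  then obtain q where q: "q \<in> lsupp X" "(\<Sum>l<N. X q j l * Y (r - q) l k) \<noteq> 0"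
    by (meson sum.not_neutral_contains_not_neutral)
  then obtain l where "X q j l * Y (r - q) l k \<noteq> 0"
    by (meson sum.not_neutral_contains_not_neutral)
  then have "r - q \<in> lsupp Y" unfolding lsupp_def by auto
  then show "r \<in> (\<lambda>(a,b). a + b) ` (lsupp X \<times> lsupp Y)"
    using q(1) by (auto intro!: image_eqI[where x="(q, r - q)"])
qed

lemma fin_lmul: "fin X \<Longrightarrow> fin Y \<Longrightarrow> fin (lmul N X Y)"
  by (rule finite_subset[OF lsupp_lmul]) auto

lemma fin_ops:
  assumes "fin X"
  shows "fin (A1op N X)" "fin (A2op N X)" "fin (Sop N X)" "fin (Sstar N X)"
proof -
  have s: "lsupp (A1op N X) \<subseteq> lsupp X \<union> {0}" "lsupp (A2op N X) \<subseteq> lsupp X \<union> {0}"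
     "lsupp (Sop N X) \<subseteq> lsupp X \<union> {0}" "lsupp (Sstar N X) \<subseteq> lsupp X \<union> {0}"
    unfolding lsupp_def A1op_def A2op_def Sop_def Sstar_def R0_def Ppos_def Pneg_def P0_def Wop_def
    by (auto split: if_splits)
  show "fin (A1op N X)" by (rule finite_subset[OF s(1)]) (use assms in auto)
  show "fin (A2op N X)" by (rule finite_subset[OF s(2)]) (use assms in auto)
  show "fin (Sop N X)" by (rule finite_subset[OF s(3)]) (use assms in auto)
  show "fin (Sstar N X)" by (rule finite_subset[OF s(4)]) (use assms in auto)
qed

lemma linf_lpair: "linf (\<lambda>H. lpair N H V)"
  unfolding linf_def by (simp add: lpair_ladd1 lpair_lsmul1)

lemma linf_Bform2: "fin L \<Longrightarrow> linf (\<lambda>H. Bform N L G H)"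
  unfolding linf_def Bform_def
  by (simp add: lmul_ladd1 lmul_lsmul1 lmul_ladd2 lmul_lsmul2 lpair_ladd2 lpair_lsmul2 algebra_simps)

lemma linf_Bform1: "fin L \<Longrightarrow> linf (\<lambda>G. Bform N L G H)"
  unfolding linf_def Bform_def
  by (simp add: lmul_ladd1 lmul_lsmul1 lmul_ladd2 lmul_lsmul2 ops_ladd ops_lsmul lpair_ladd1 lpair_lsmul1
      fin_ops fin_lmul algebra_simps)

definition Vf :: "nat \<Rightarrow> lmat \<Rightarrow> lmat \<Rightarrow> lmat" where
  "Vf N L G = (\<lambda>p j k. if j < N \<and> k < N \<and> k = rho N (int j - p) then Bform N L G (el N (-p) (int k)) else 0)"

lemma rho_rho: "0 < N \<Longrightarrow> rho N (int (rho N a)) = rho N a"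
  by (simp add: rho_def)

lemma rho_rho_diff: "0 < N \<Longrightarrow> rho N (int (rho N a) - q) = rho N (a - q)"
  by (simp add: rho_def int_rho mod_diff_left_eq)

lemma el_rho: "0 < N \<Longrightarrow> el N q (int (rho N a)) = el N q a"
  unfolding el_def by (simp add: rho_rho rho_rho_diff)

lemma lpair_el_V:
  assumes N: "0 < N"
  shows "lpair N (el N q a) (Vf N L G) = Bform N L G (el N q a)"
proof -
  have "rho N (int (rho N (a - q)) - - q) = rho N a"
    using rho_rho_diff[OF N, of "a - q" "-q"] by simp
  then show ?thesis
    unfolding lpair_el_left[OF N] Vf_def using rho_lt[OF N] by (simp add: el_rho[OF N])
qed

lemma lpair_V:
  assumes N: "0 < N" and L: "fin L" and H: "H \<in> gset N"
  shows "lpair N H (Vf N L G) = Bform N L G H"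
  using linf_expand[OF linf_lpair N H, of N "Vf N L G"] linf_expand[OF linf_Bform2[OF L] N H, of N G]
  by (simp add: lpair_el_V[OF N])

lemma tang_gen:
  assumes N: "0 < N" and Nm: "2 * m + 2 \<le> N" and G: "G \<in> gset N" and q: "q \<notin> {0..int m}"
  shows "Bform N (Tmat N m b a) G (el N q c) = 0"
proof -
  have "Bform N (Tmat N m b a) G (el N q c)
     = (\<Sum>(p,u)\<in>lsupp G \<times> {..<N}. G p u (rho N (int u - p)) * Bform N (Tmat N m b a) (el N p (int u)) (el N q c))"
    by (rule linf_expand[OF linf_Bform1[OF Tmat_finite[OF N]] N G])
  also have "\<dots> = 0"
  proof (rule sum.neutral, rule ballI)
    fix x assume "x \<in> lsupp G \<times> {..<N}"
    obtain p u where x: "x = (p, u)" by (cases x)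
    have "Bform N (Tmat N m b a) (el N p ((int u - p) + p)) (el N q ((c - q) + q)) = 0"
      by (rule tang_el[OF N Nm q])
    then show "(case x of (p, u) \<Rightarrow> G p u (rho N (int u - p)) * Bform N (Tmat N m b a) (el N p (int u)) (el N q c)) = 0"
      using x by simp
  qed
  finally show ?thesis .
qed

lemma Tmat_gset:
  assumes N: "0 < N" shows "Tmat N m b a \<in> gset N"
  unfolding gset_def
proof (rule CollectI, rule conjI)
  show "fin (Tmat N m b a)" by (rule Tmat_finite[OF N])
  show "\<forall>p j k. Tmat N m b a p j k \<noteq> 0 \<longrightarrow> j < N \<and> k < N \<and> (int j - int k - p) mod int N = 0"
  proof (intro allI impI)
  fix p j k assume "Tmat N m b a p j k \<noteq> 0"
  then have *: "j < N" "k < N" "int k = (int j - p) mod int N" using N by (auto simp: Tmat_eq split: if_splits)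
  then show "j < N \<and> k < N \<and> (int j - int k - p) mod int N = 0"
  proof -
    have "int j - int k - p = (int j - p) - (int j - p) mod int N" using *(3) by simp
    also have "\<dots> = int N * ((int j - p) div int N)" by (simp add: minus_mod_eq_mult_div)
    finally show ?thesis using * by simp
  qed
  qed
qed

lemma Vf_zero:
  assumes N: "0 < N" and Nm: "2 * m + 2 \<le> N" and G: "G \<in> gset N" and p: "- p \<notin> {0..int m}"
  shows "Vf N (Tmat N m b a) G p j k = 0"
  unfolding Vf_def using tang_gen[OF N Nm G p] by simp

lemma Vf_gset:
  assumes N: "0 < N" and Nm: "2 * m + 2 \<le> N" and G: "G \<in> gset N"
  shows "Vf N (Tmat N m b a) G \<in> gset N"
  unfolding gset_def
proof (rule CollectI, rule conjI)
  have "lsupp (Vf N (Tmat N m b a) G) \<subseteq> {- int m..0}"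
  proof
    fix p assume "p \<in> lsupp (Vf N (Tmat N m b a) G)"
    then obtain j k where "Vf N (Tmat N m b a) G p j k \<noteq> 0" unfolding lsupp_def by auto
    then have "- p \<in> {0..int m}" using Vf_zero[OF N Nm G] by blast
    then show "p \<in> {- int m..0}" by auto
  qed
  then show "fin (Vf N (Tmat N m b a) G)" by (rule finite_subset) auto
  show "\<forall>p j k. Vf N (Tmat N m b a) G p j k \<noteq> 0 \<longrightarrow> j < N \<and> k < N \<and> (int j - int k - p) mod int N = 0"
  proof (intro allI impI)
    fix p j k assume "Vf N (Tmat N m b a) G p j k \<noteq> 0"
    then have *: "j < N" "k < N" "int k = (int j - p) mod int N"
      unfolding Vf_def by (auto split: if_splits simp: int_rho[OF N])
    have "int j - int k - p = (int j - p) - (int j - p) mod int N" using *(3) by simp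
    also have "\<dots> = int N * ((int j - p) div int N)" by (simp add: minus_mod_eq_mult_div)
    finally show "j < N \<and> k < N \<and> (int j - int k - p) mod int N = 0" using * by simp
  qed
qed

lemma rho_pat: "0 < N \<Longrightarrow> (k = rho N x) = (int k = x mod int N)"
  unfolding rho_def by auto

lemma Tmat_move:
  assumes N: "0 < N" and Nm: "2 * m + 2 \<le> N" and G: "G \<in> gset N"
  shows "ladd (Tmat N m b a) (lsmul t (Vf N (Tmat N m b a) G)) \<in> Tset N m"
proof -
  let ?V = "Vf N (Tmat N m b a) G"
  define b' where "b' = (\<lambda>u. b u + t * ?V 0 u u)"
  define a' where "a' = (\<lambda>s u. a s u + t * ?V (- int s) u (rho N (int u + int s)))"
  have "ladd (Tmat N m b a) (lsmul t ?V) = Tmat N m b' a'"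
  proof (intro ext)
    fix p j k
    show "ladd (Tmat N m b a) (lsmul t ?V) p j k = Tmat N m b' a' p j k"
    proof (cases "j < N \<and> k < N \<and> int k = (int j - p) mod int N")
      case False
      then have "?V p j k = 0" unfolding Vf_def by (auto simp: rho_pat[OF N])
      then show ?thesis using False by (auto simp: ladd_apply lsmul_apply Tmat_eq[OF N])
    next
      case True
      then have k: "k = rho N (int j - p)" by (simp add: rho_pat[OF N])
      have "Xv m b' a' (-p) j = Xv m b a (-p) j + t * ?V p j k"
      proof -
        consider "-p = -1" | "-p = 0" | "1 \<le> -p \<and> -p \<le> int m" | "- p \<notin> {-1..int m}" by fastforce
        then show ?thesis
        proof cases
          case 1
          then have "?V p j k = 0" by (intro Vf_zero[OF N Nm G]) auto
          then show ?thesis using 1 by (simp add: Xv_def)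
        next
          case 2
          then have "p = 0" by simp
          moreover have "rho N (int j) = j" using True el_rho_nat[OF N] by simp
          ultimately show ?thesis using k True by (simp add: Xv_def b'_def)
        next
          case 3
          then have "rho N (int j + int (nat (- p))) = k" using k by simp
          then show ?thesis using 3 by (simp add: Xv_def a'_def)
        next
          case 4
          then have "?V p j k = 0" by (intro Vf_zero[OF N Nm G]) auto
          then show ?thesis using 4 by (auto simp: Xv_def)
        qed
      qed
      then show ?thesis using True by (simp add: ladd_apply lsmul_apply Tmat_eq[OF N])
    qed
  qed
  then show ?thesis unfolding Tset_def by blast
qed

lemma part1:
  assumes N: "0 < N" and Nm: "2 * m + 2 \<le> N"
  shows "poisson_submanifold N (PB2 N) (Tset N m)"
  unfolding poisson_submanifold_def
proof (intro conjI ballI allI impI)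
  show "Tset N m \<subseteq> gset N" unfolding Tset_def using Tmat_gset[OF N] by blast
  fix L \<phi> assume L: "L \<in> Tset N m" and "\<exists>G. has_grad N \<phi> L G"
  then obtain G where g: "has_grad N \<phi> L G" by blast
  from L obtain b a where Ld: "L = Tmat N m b a" unfolding Tset_def by blast
  have G: "G \<in> gset N" using g unfolding has_grad_def by blast
  let ?V = "Vf N L G"
  show "\<exists>V. (\<forall>t. ladd L (lsmul t V) \<in> Tset N m) \<and>
          (\<forall>\<psi>. (\<exists>H. has_grad N \<psi> L H) \<longrightarrow>
             ((\<lambda>\<epsilon>. \<psi> (ladd L (lsmul \<epsilon> V))) has_field_derivative PB2 N \<phi> \<psi> L) (at 0))"
  proof (intro exI conjI allI impI)
    fix t show "ladd L (lsmul t ?V) \<in> Tset N m" unfolding Ld by (rule Tmat_move[OF N Nm G])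
  next
    fix \<psi> assume "\<exists>H. has_grad N \<psi> L H"
    then obtain H where h: "has_grad N \<psi> L H" by blast
    have VG: "?V \<in> gset N" unfolding Ld by (rule Vf_gset[OF N Nm G])
    have H: "H \<in> gset N" using h unfolding has_grad_def by blast
    have d: "((\<lambda>\<epsilon>. \<psi> (ladd L (lsmul \<epsilon> ?V))) has_field_derivative lpair N H ?V) (at 0)"
      using h VG unfolding has_grad_def by blast
    have "lpair N H ?V = Bform N L G H"
      unfolding Ld by (rule lpair_V[OF N Tmat_finite[OF N] H])
    also have "\<dots> = PB2 N \<phi> \<psi> L"
      unfolding PB2_Bform grad_unique[OF N g] grad_unique[OF N h] ..
    finally show "((\<lambda>\<epsilon>. \<psi> (ladd L (lsmul \<epsilon> ?V))) has_field_derivative PB2 N \<phi> \<psi> L) (at 0)"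
      using d by simp
  qed
qed

lemma coord_T:
  assumes N: "0 < N" and i: "0 \<le> i"
  shows "coord N m i k (Tmat N m b a) = Xv m b a i (rho N k)"
proof -
  consider "i = 0" | "1 \<le> i \<and> i \<le> int m" | "i > int m" using i by fastforce
  then show ?thesis
  proof cases
    case 1 then show ?thesis
      using Tm_val[OF N, of m b a 0 k k] by (simp add: coord_def rho_def)
  next
    case 2 then show ?thesis
      using Tm_val[OF N, of m b a "-i" k "k+i"] by (simp add: coord_def rho_def)
  next
    case 3 then show ?thesis by (simp add: coord_def Xv_def)
  qed
qed

lemma PB_coord:
  assumes N: "0 < N" and Nm: "2 * m + 2 \<le> N" and i: "0 \<le> i" "i \<le> int m" and j: "0 \<le> j" "j \<le> int m"
  shows "PB2 N (coord N m i k) (coord N m j l) (Tmat N m b a)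
    = (Fsum N m b a i k j l + Xv m b a i (rho N k) * Xv m b a j (rho N l) * of_int (Wcl N i j ((l - k) mod int N))) / 2"
proof -
  have "PB2 N (coord N m i k) (coord N m j l) (Tmat N m b a) = Bform N (Tmat N m b a) (el N i (k+i)) (el N j (l+j))"
    unfolding PB2_Bform using grad_unique[OF N coord_grad[OF N i]] grad_unique[OF N coord_grad[OF N j]] by simp
  also have "\<dots> = (Fsum N m b a i k j l + Xv m b a i (rho N k) * Xv m b a j (rho N l) * Wc N i k j l) / 2"
    using Bform_el[OF N, of m b a i k j l] by (simp add: field_simps)
  also have "Wc N i k j l = of_int (Wcl N i j ((l - k) mod int N))"
    unfolding Wc_Wi using Wi_closed[OF i j Nm] by simp
  finally show ?thesis .
qed

lemma Fsum_one:
  assumes e: "int N dvd (l + j - k - e)"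
    and others: "\<And>s. -1 \<le> s \<Longrightarrow> s \<le> int m \<Longrightarrow> s \<noteq> e \<Longrightarrow> int N dvd (l + j - k - s) \<Longrightarrow>
        (of_int (sgn (i - s)) + of_int (sgn (j - s))) * Xv m b a s (rho N k) * Xv m b a (i + j - s) (rho N l) = 0"
  shows "Fsum N m b a i k j l = (of_int (sgn (i - e)) + of_int (sgn (j - e))) * Xv m b a e (rho N k) * Xv m b a (i + j - e) (rho N l)"
proof (cases "e \<in> {-1..int m}")
  case True
  have "Fsum N m b a i k j l = (\<Sum>s\<in>{-1..int m}. if s = e then (of_int (sgn (i - e)) + of_int (sgn (j - e))) * Xv m b a e (rho N k) * Xv m b a (i + j - e) (rho N l) else 0)"
    unfolding Fsum_def using e others by (intro sum.cong refl) auto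
  then show ?thesis using True by simp
next
  case False
  then have "Xv m b a e (rho N k) = 0" using Xv_nz by fastforce
  moreover have "Fsum N m b a i k j l = 0"
    unfolding Fsum_def
  proof (intro sum.neutral ballI)
    fix s assume s: "s \<in> {-1..int m}"
    then have "s \<noteq> e" using False by auto
    then show "(if int N dvd (l + j - k - s) then (of_int (sgn (i - s)) + of_int (sgn (j - s))) * Xv m b a s (rho N k) * Xv m b a (i + j - s) (rho N l) else 0) = 0"
      using others[of s] s by auto
  qed
  ultimately show ?thesis by simp
qed

lemma dvd_small: "int N dvd x \<Longrightarrow> - int N < x \<Longrightarrow> x < int N \<Longrightarrow> x = 0"
proof -
  assume h: "int N dvd x" "- int N < x" "x < int N"
  then have "0 < int N" by auto
  then show "x = 0" using mod_zero_range[of "int N" x] h by (auto simp: dvd_eq_mod_eq_0)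
qed

lemma claim_gen:
  assumes N: "0 < N" and Nm: "2 * m + 2 \<le> N" and i: "0 \<le> i" "i \<le> int m" and j: "0 \<le> j" "j \<le> int m"
    and others: "\<And>s. -1 \<le> s \<Longrightarrow> s \<le> int m \<Longrightarrow> s \<noteq> d + j \<Longrightarrow> int N dvd (d + j - s) \<Longrightarrow>
        (of_int (sgn (i - s)) + of_int (sgn (j - s))) * Xv m b a s (rho N k) * Xv m b a (i + j - s) (rho N (k + d)) = 0"
  shows "PB2 N (coord N m i k) (coord N m j (k + d)) (Tmat N m b a)
    = ((of_int (sgn (i - (d + j))) + of_int (sgn (j - (d + j)))) * Xv m b a (d + j) (rho N k) * Xv m b a (i - d) (rho N (k + d))
       + Xv m b a i (rho N k) * Xv m b a j (rho N (k + d)) * of_int (Wcl N i j (d mod int N))) / 2"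
proof -
  have "Fsum N m b a i k j (k + d) = (of_int (sgn (i - (d + j))) + of_int (sgn (j - (d + j)))) * Xv m b a (d + j) (rho N k) * Xv m b a (i + j - (d + j)) (rho N (k + d))"
    by (rule Fsum_one) (use others in \<open>auto simp: algebra_simps\<close>)
  then show ?thesis using PB_coord[OF N Nm i j, of k "k + d" b a] by simp
qed

context
  fixes N m :: nat and b :: "nat \<Rightarrow> complex" and a :: "nat \<Rightarrow> nat \<Rightarrow> complex"
  assumes N: "0 < N" and Nm: "2 * m + 2 \<le> N" and m1: "1 \<le> m"
begin

abbreviation "X s u \<equiv> Xv m b a s (rho N u)"
abbreviation "LL \<equiv> Tmat N m b a"

lemma nodvd: "s \<noteq> e \<Longrightarrow> - int N < e - s \<Longrightarrow> e - s < int N \<Longrightarrow> \<not> int N dvd (e - s)"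
  using dvd_small[of N "e - s"] by auto

lemma modsmall: "0 \<le> d \<Longrightarrow> d < int N \<Longrightarrow> d mod int N = d"
  by simp

lemma Nmi: "2 * int m + 2 \<le> int N" using Nm by linarith

lemma claim_gen2:
  assumes i: "0 \<le> i" "i \<le> int m" and j: "0 \<le> j" "j \<le> int m"
    and rng: "\<And>s. -1 \<le> s \<Longrightarrow> s \<le> int m \<Longrightarrow> - int N < d + j - s \<and> d + j - s < int N"
  shows "PB2 N (coord N m i k) (coord N m j (k + d)) LL
    = ((of_int (sgn (i - (d + j))) + of_int (sgn (j - (d + j)))) * X (d + j) k * X (i - d) (k + d)
       + X i k * X j (k + d) * of_int (Wcl N i j (d mod int N))) / 2"
proof (rule claim_gen[OF N Nm i j])
  fix s assume s: "-1 \<le> s" "s \<le> int m" "s \<noteq> d + j" "int N dvd (d + j - s)"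
  then show "(of_int (sgn (i - s)) + of_int (sgn (j - s))) * X s k * X (i + j - s) (k + d) = 0"
    using nodvd[of s "d + j"] rng[of s] by auto
qed

lemma c0: "PB2 N (coord N m 0 k) (coord N m 0 (k+1)) LL = - coord N m 1 k LL"
proof -
  have "PB2 N (coord N m 0 k) (coord N m 0 (k+1)) LL =
    ((of_int (sgn (0 - (1 + 0))) + of_int (sgn (0 - (1 + 0)))) * X (1 + 0) k * X (0 - 1) (k + 1)
       + X 0 k * X 0 (k + 1) * of_int (Wcl N 0 0 (1 mod int N))) / 2"
    by (rule claim_gen2) (use Nmi m1 in auto)
  moreover have "Wcl N 0 0 (1 mod int N) = 0" using Nm by (simp add: Wcl_def)
  ultimately show ?thesis using coord_T[OF N] by simp
qed

lemma c1:
  assumes j: "1 \<le> j" "j \<le> int m"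
  shows "PB2 N (coord N m 0 k) (coord N m j (k + 1)) LL = - coord N m (j + 1) k LL"
proof -
  have "PB2 N (coord N m 0 k) (coord N m j (k+1)) LL =
    ((of_int (sgn (0 - (1 + j))) + of_int (sgn (j - (1 + j)))) * X (1 + j) k * X (0 - 1) (k + 1)
       + X 0 k * X j (k + 1) * of_int (Wcl N 0 j (1 mod int N))) / 2"
    by (rule claim_gen2) (use Nmi m1 j in auto)
  moreover have "Wcl N 0 j (1 mod int N) = 0" using Nmi j m1 by (simp add: Wcl_def)
  ultimately show ?thesis using coord_T[OF N] j by (simp add: sgn_if add.commute)
qed

lemma c2:
  assumes j: "1 \<le> j" "j \<le> int m"
  shows "PB2 N (coord N m j k) (coord N m 0 (k + j + 1)) LL = - coord N m (j + 1) k LL"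
proof -
  have "PB2 N (coord N m j k) (coord N m 0 (k + (j + 1))) LL =
    ((of_int (sgn (j - ((j + 1) + 0))) + of_int (sgn (0 - ((j + 1) + 0)))) * X ((j + 1) + 0) k * X (j - (j + 1)) (k + (j + 1))
       + X j k * X 0 (k + (j + 1)) * of_int (Wcl N j 0 ((j + 1) mod int N))) / 2"
    by (rule claim_gen2) (use Nmi m1 j in auto)
  moreover have "Wcl N j 0 ((j + 1) mod int N) = 0" using Nmi j m1 by (simp add: Wcl_def)
  ultimately show ?thesis using coord_T[OF N] j by (simp add: sgn_if add.assoc)
qed

lemma c3:
  assumes j: "1 \<le> j" "j \<le> int m"
  shows "PB2 N (coord N m 0 k) (coord N m j k) LL = - coord N m 0 k LL * coord N m j k LL"
proof -
  have "PB2 N (coord N m 0 k) (coord N m j (k + 0)) LL =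
    ((of_int (sgn (0 - (0 + j))) + of_int (sgn (j - (0 + j)))) * X (0 + j) k * X (0 - 0) (k + 0)
       + X 0 k * X j (k + 0) * of_int (Wcl N 0 j (0 mod int N))) / 2"
    by (rule claim_gen2) (use Nmi m1 j in auto)
  moreover have "Wcl N 0 j (0 mod int N) = -1" using Nmi j m1 by (simp add: Wcl_def)
  ultimately show ?thesis using coord_T[OF N] j by (simp add: sgn_if)
qed

lemma c4:
  assumes j: "1 \<le> j" "j \<le> int m"
  shows "PB2 N (coord N m j k) (coord N m 0 (k + j)) LL = - coord N m j k LL * coord N m 0 (k + j) LL"
proof -
  have "PB2 N (coord N m j k) (coord N m 0 (k + j)) LL =
    ((of_int (sgn (j - (j + 0))) + of_int (sgn (0 - (j + 0)))) * X (j + 0) k * X (j - j) (k + j)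
       + X j k * X 0 (k + j) * of_int (Wcl N j 0 (j mod int N))) / 2"
    by (rule claim_gen2) (use Nmi m1 j in auto)
  moreover have "Wcl N j 0 (j mod int N) = -1" using Nmi j m1 by (simp add: Wcl_def)
  ultimately show ?thesis using coord_T[OF N] j by (simp add: sgn_if)
qed

lemma c5:
  assumes i: "1 \<le> i" "i \<le> int m" and j: "1 \<le> j" "j \<le> int m"
  shows "PB2 N (coord N m i k) (coord N m j (k + i + 1)) LL = - coord N m (i + j + 1) k LL"
proof -
  have "PB2 N (coord N m i k) (coord N m j (k + (i + 1))) LL =
    ((of_int (sgn (i - ((i + 1) + j))) + of_int (sgn (j - ((i + 1) + j)))) * X ((i + 1) + j) k * X (i - (i + 1)) (k + (i + 1))
       + X i k * X j (k + (i + 1)) * of_int (Wcl N i j ((i + 1) mod int N))) / 2"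
  proof (rule claim_gen[OF N Nm])
    fix s assume s: "-1 \<le> s" "s \<le> int m" "s \<noteq> (i + 1) + j" "int N dvd ((i + 1) + j - s)"
    show "(of_int (sgn (i - s)) + of_int (sgn (j - s))) * X s k * X (i + j - s) (k + (i + 1)) = 0"
    proof (cases "(i + 1) + j - s < int N")
      case True
      then show ?thesis using nodvd[of s "(i + 1) + j"] s Nmi i j by auto
    next
      case False
      then have "i + j - s > int m" using Nmi by linarith
      then have "X (i + j - s) (k + (i + 1)) = 0" using Xv_nz[of m b a "i + j - s"] by auto
      then show ?thesis by simp
    qed
  qed (use i j in auto)
  also have "\<dots> = - X (i + j + 1) k"
  proof -
    have "Wcl N i j ((i + 1) mod int N) = 0" using Nmi i j m1 by (simp add: Wcl_def)
    moreover have "sgn (i - ((i + 1) + j)) = -1" "sgn (j - ((i + 1) + j)) = -1" using i j by (simp_all add: sgn_if)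
    moreover have "(i + 1) + j = i + j + 1" "i - (i + 1) = -1" by simp_all
    ultimately show ?thesis using i j by (simp add: sgn_if algebra_simps)
  qed
  finally show ?thesis using coord_T[OF N, of "i + j + 1"] i j by (simp add: add.assoc)
qed

lemma c6:
  assumes i: "1 \<le> i" and ij: "i < j" and j: "j \<le> int m"
  shows "PB2 N (coord N m i k) (coord N m j k) LL = - coord N m i k LL * coord N m j k LL"
proof -
  have "PB2 N (coord N m i k) (coord N m j (k + 0)) LL =
    ((of_int (sgn (i - (0 + j))) + of_int (sgn (j - (0 + j)))) * X (0 + j) k * X (i - 0) (k + 0)
       + X i k * X j (k + 0) * of_int (Wcl N i j (0 mod int N))) / 2"
    by (rule claim_gen2) (use Nmi m1 i ij j in auto)
  moreover have "Wcl N i j (0 mod int N) = -1" using Nmi i ij j m1 by (simp add: Wcl_def)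
  ultimately show ?thesis using coord_T[OF N] i ij j by (simp add: sgn_if)
qed

lemma c7:
  assumes i: "1 \<le> i" and ij: "i < j" and j: "j \<le> int m"
  shows "PB2 N (coord N m j k) (coord N m i (k + j - i)) LL = - coord N m j k LL * coord N m i (k + j - i) LL"
proof -
  have "PB2 N (coord N m j k) (coord N m i (k + (j - i))) LL =
    ((of_int (sgn (j - ((j - i) + i))) + of_int (sgn (i - ((j - i) + i)))) * X ((j - i) + i) k * X (j - (j - i)) (k + (j - i))
       + X j k * X i (k + (j - i)) * of_int (Wcl N j i ((j - i) mod int N))) / 2"
    by (rule claim_gen2) (use Nmi m1 i ij j in auto)
  moreover have "Wcl N j i ((j - i) mod int N) = -1" using Nmi i ij j m1 by (simp add: Wcl_def)
  ultimately show ?thesis using coord_T[OF N] i ij j by (simp add: sgn_if algebra_simps)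
qed

lemma c8:
  assumes i: "1 \<le> i" and ij: "i \<le> j" and j: "j \<le> int m" and r: "1 \<le> r" "r \<le> i"
  shows "PB2 N (coord N m i k) (coord N m j (k + r)) LL
     = - coord N m i k LL * coord N m j (k + r) LL - coord N m (j + r) k LL * coord N m (i - r) (k + r) LL"
proof -
  have "PB2 N (coord N m i k) (coord N m j (k + r)) LL =
    ((of_int (sgn (i - (r + j))) + of_int (sgn (j - (r + j)))) * X (r + j) k * X (i - r) (k + r)
       + X i k * X j (k + r) * of_int (Wcl N i j (r mod int N))) / 2"
    by (rule claim_gen2) (use Nmi m1 i ij j r in auto)
  also have "\<dots> = - X i k * X j (k + r) - X (j + r) k * X (i - r) (k + r)"
  proof -
    have "Wcl N i j (r mod int N) = -2" using Nmi i ij j m1 r by (simp add: Wcl_def sgn_if)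
    moreover have "sgn (i - (r + j)) = -1" "sgn (j - (r + j)) = -1" using i ij j r by (simp_all add: sgn_if)
    ultimately show ?thesis by (simp add: field_simps add.commute)
  qed
  finally show ?thesis using coord_T[OF N] i ij j r by simp
qed

lemma c9:
  assumes i: "1 \<le> i" and ij: "i \<le> j" and j: "j \<le> int m" and r: "j - i + 1 \<le> r" "r \<le> j"
  shows "PB2 N (coord N m j k) (coord N m i (k + r)) LL
     = - coord N m j k LL * coord N m i (k + r) LL - coord N m (i + r) k LL * coord N m (j - r) (k + r) LL"
proof -
  have "PB2 N (coord N m j k) (coord N m i (k + r)) LL =
    ((of_int (sgn (j - (r + i))) + of_int (sgn (i - (r + i)))) * X (r + i) k * X (j - r) (k + r)
       + X j k * X i (k + r) * of_int (Wcl N j i (r mod int N))) / 2"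
    by (rule claim_gen2) (use Nmi m1 i ij j r in auto)
  also have "\<dots> = - X j k * X i (k + r) - X (i + r) k * X (j - r) (k + r)"
  proof -
    have "Wcl N j i (r mod int N) = -2" using Nmi i ij j m1 r by (simp add: Wcl_def sgn_if)
    moreover have "sgn (j - (r + i)) = -1" "sgn (i - (r + i)) = -1" using i ij j r by (simp_all add: sgn_if)
    ultimately show ?thesis by (simp add: field_simps add.commute)
  qed
  finally show ?thesis using coord_T[OF N] i ij j r by simp
qed

end

lemma listed_unf: "listed N m i k j l \<longleftrightarrow>
        (i = 0 \<and> j = 0 \<and> (l - k - 1) mod int N = 0)
      \<or> (i = 0 \<and> 1 \<le> j \<and> j \<le> int m \<and> (l - k - 1) mod int N = 0)
      \<or> (1 \<le> i \<and> i \<le> int m \<and> j = 0 \<and> (l - k - (i + 1)) mod int N = 0)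
      \<or> (i = 0 \<and> 1 \<le> j \<and> j \<le> int m \<and> (l - k - 0) mod int N = 0)
      \<or> (1 \<le> i \<and> i \<le> int m \<and> j = 0 \<and> (l - k - i) mod int N = 0)
      \<or> (1 \<le> i \<and> i \<le> int m \<and> 1 \<le> j \<and> j \<le> int m \<and> (l - k - (i + 1)) mod int N = 0)
      \<or> (1 \<le> i \<and> i < j \<and> j \<le> int m \<and> (l - k - 0) mod int N = 0)
      \<or> (1 \<le> j \<and> j < i \<and> i \<le> int m \<and> (l - k - (i - j)) mod int N = 0)
      \<or> (1 \<le> i \<and> i \<le> j \<and> j \<le> int m \<and> (\<exists>r. 1 \<le> r \<and> r \<le> i \<and> (l - k - r) mod int N = 0))
      \<or> (1 \<le> j \<and> j \<le> i \<and> i \<le> int m \<and> (\<exists>r. i - j + 1 \<le> r \<and> r \<le> i \<and> (l - k - r) mod int N = 0))"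
  unfolding listed_def Let_def by simp

lemma LI1: "i = 0 \<Longrightarrow> j = 0 \<Longrightarrow> (l - k - 1) mod int N = 0 \<Longrightarrow> listed N m i k j l"
  unfolding listed_unf by (rule disjI1) simp
lemma LI2: "i = 0 \<Longrightarrow> 1 \<le> j \<Longrightarrow> j \<le> int m \<Longrightarrow> (l - k - 1) mod int N = 0 \<Longrightarrow> listed N m i k j l"
  unfolding listed_unf by (rule disjI2, rule disjI1) simp
lemma LI3: "1 \<le> i \<Longrightarrow> i \<le> int m \<Longrightarrow> j = 0 \<Longrightarrow> (l - k - (i + 1)) mod int N = 0 \<Longrightarrow> listed N m i k j l"
  unfolding listed_unf by (rule disjI2, rule disjI2, rule disjI1) simp
lemma LI4: "i = 0 \<Longrightarrow> 1 \<le> j \<Longrightarrow> j \<le> int m \<Longrightarrow> (l - k - 0) mod int N = 0 \<Longrightarrow> listed N m i k j l"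
  unfolding listed_unf by (rule disjI2, rule disjI2, rule disjI2, rule disjI1) simp
lemma LI5: "1 \<le> i \<Longrightarrow> i \<le> int m \<Longrightarrow> j = 0 \<Longrightarrow> (l - k - i) mod int N = 0 \<Longrightarrow> listed N m i k j l"
  unfolding listed_unf by (rule disjI2, rule disjI2, rule disjI2, rule disjI2, rule disjI1) simp
lemma LI6: "1 \<le> i \<Longrightarrow> i \<le> int m \<Longrightarrow> 1 \<le> j \<Longrightarrow> j \<le> int m \<Longrightarrow> (l - k - (i + 1)) mod int N = 0 \<Longrightarrow> listed N m i k j l"
  unfolding listed_unf by (rule disjI2, rule disjI2, rule disjI2, rule disjI2, rule disjI2, rule disjI1) simp
lemma LI7: "1 \<le> i \<Longrightarrow> i < j \<Longrightarrow> j \<le> int m \<Longrightarrow> (l - k - 0) mod int N = 0 \<Longrightarrow> listed N m i k j l"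
  unfolding listed_unf by (rule disjI2, rule disjI2, rule disjI2, rule disjI2, rule disjI2, rule disjI2, rule disjI1) simp
lemma LI8: "1 \<le> j \<Longrightarrow> j < i \<Longrightarrow> i \<le> int m \<Longrightarrow> (l - k - (i - j)) mod int N = 0 \<Longrightarrow> listed N m i k j l"
  unfolding listed_unf by (rule disjI2, rule disjI2, rule disjI2, rule disjI2, rule disjI2, rule disjI2, rule disjI2, rule disjI1) simp
lemma LI9: "1 \<le> i \<Longrightarrow> i \<le> j \<Longrightarrow> j \<le> int m \<Longrightarrow> 1 \<le> r \<Longrightarrow> r \<le> i \<Longrightarrow> (l - k - r) mod int N = 0 \<Longrightarrow> listed N m i k j l"
  unfolding listed_unf by (rule disjI2, rule disjI2, rule disjI2, rule disjI2, rule disjI2, rule disjI2, rule disjI2, rule disjI2, rule disjI1) (intro conjI exI[of _ r]; simp)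
lemma LI10: "1 \<le> j \<Longrightarrow> j \<le> i \<Longrightarrow> i \<le> int m \<Longrightarrow> i - j + 1 \<le> r \<Longrightarrow> r \<le> i \<Longrightarrow> (l - k - r) mod int N = 0 \<Longrightarrow> listed N m i k j l"
  unfolding listed_unf by (rule disjI2, rule disjI2, rule disjI2, rule disjI2, rule disjI2, rule disjI2, rule disjI2, rule disjI2, rule disjI2) (intro conjI exI[of _ r]; simp)

lemma tpart:
  assumes "0 \<le> i" "i \<le> int m" "0 \<le> j" "j \<le> int m" "(l - k - (i + 1)) mod int N = 0"
  shows "listed N m i k j l"
proof -
  consider "i = 0 \<and> j = 0" | "i = 0 \<and> 1 \<le> j" | "1 \<le> i \<and> j = 0" | "1 \<le> i \<and> 1 \<le> j" using assms by linarith
  then show ?thesis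
  proof cases
    case 1 then show ?thesis using assms by (intro LI1) auto
  next
    case 2 then show ?thesis using assms by (intro LI2) auto
  next
    case 3 then show ?thesis using assms by (intro LI3) auto
  next
    case 4 then show ?thesis using assms by (intro LI6) auto
  qed
qed

lemma dpart:
  assumes "0 \<le> i" "i < j" "j \<le> int m" "(l - k - 0) mod int N = 0"
  shows "listed N m i k j l"
proof (cases "i = 0")
  case True then show ?thesis using assms by (intro LI4) auto
next
  case False then show ?thesis using assms by (intro LI7) auto
qed

lemma wpart:
  assumes "0 \<le> i" "i \<le> int m" "0 \<le> j" "j \<le> int m" "1 \<le> e" "e \<le> i" "i \<le> e + j" "(l - k - e) mod int N = 0"
  shows "listed N m i k j l"
proof (cases "e + j = i")
  case True
  show ?thesis
  proof (cases "j = 0")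
    case True then show ?thesis using assms \<open>e + j = i\<close> by (intro LI5) auto
  next
    case False
    have "i - j = e" using \<open>e + j = i\<close> by simp
    then have "(l - k - (i - j)) mod int N = 0" using assms(8) by simp
    then show ?thesis using assms False \<open>e + j = i\<close> by (intro LI8) auto
  qed
next
  case False
  then have ji: "1 \<le> j" using assms by auto
  show ?thesis
  proof (cases "i \<le> j")
    case True
    then show ?thesis using assms ji by (intro LI9[where r=e]) auto
  next
    case False
    then show ?thesis using assms ji \<open>e + j \<noteq> i\<close> by (intro LI10[where r=e]) auto
  qed
qed

lemma caseA:
  assumes "0 \<le> i" "i \<le> int m" "0 \<le> j" "j \<le> int m" "i < s" "j < s" "-1 \<le> i + j - s"
    "int N dvd (l + j - k - s)"
  shows "listed N m i k j l"
proof -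
  have c: "(l - k - (s - j)) mod int N = 0"
    using assms(8) by (simp add: dvd_eq_mod_eq_0 algebra_simps)
  show ?thesis
  proof (cases "s - j = i + 1")
    case True then show ?thesis using tpart[of i m j l k N] assms c by simp
  next
    case False
    then show ?thesis using wpart[of i m j "s - j" l k N] assms c by simp
  qed
qed

lemma modneg0: "(x mod int N = 0) \<Longrightarrow> ((- x) mod int N = 0)"
  by (simp add: dvd_eq_mod_eq_0[symmetric])

lemma Fsum_zero_nl:
  assumes i: "0 \<le> i" "i \<le> int m" and j: "0 \<le> j" "j \<le> int m"
    and nl1: "\<not> listed N m i k j l" and nl2: "\<not> listed N m j l i k"
  shows "Fsum N m b a i k j l = 0"
  unfolding Fsum_def
proof (intro sum.neutral ballI)
  fix s assume s: "s \<in> {-1..int m}"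
  show "(if int N dvd (l + j - k - s)
      then (of_int (sgn (i - s)) + of_int (sgn (j - s))) * Xv m b a s (rho N k) * Xv m b a (i + j - s) (rho N l) else 0) = 0"
  proof (cases "int N dvd (l + j - k - s) \<and> Xv m b a (i + j - s) (rho N l) \<noteq> 0")
    case False then show ?thesis by auto
  next
    case True
    then have dv: "int N dvd (l + j - k - s)" and t: "-1 \<le> i + j - s" using Xv_nz by auto
    have "sgn (i - s) + sgn (j - s) = 0"
    proof (rule ccontr)
      assume nz: "sgn (i - s) + sgn (j - s) \<noteq> 0"
      then consider "i < s \<and> j < s" | "s < i \<and> s < j" | "s = i \<and> j < i" | "s = i \<and> i < j" | "s = j \<and> i < j" | "s = j \<and> j < i"
        by (fastforce simp: sgn_if split: if_splits)
      then show False
      proof cases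
        case 1 then show False using caseA[OF i j _ _ t dv] nl1 by auto
      next
        case 2
        have "int N dvd (k + i - l - (i + j - s))" using dv
          by (metis (no_types, opaque_lifting) dvd_minus_iff minus_diff_eq add_diff_cancel_left diff_diff_eq2 diff_diff_eq add.commute)
        then show False using caseA[OF j i, where s="i + j - s" and k=l and l=k and N=N] 2 s nl2 by (auto simp: algebra_simps)
      next
        case 3
        have "(l - k - (i - j)) mod int N = 0" using dv 3 by (simp add: dvd_eq_mod_eq_0 algebra_simps)
        then show False using wpart[OF i j, where e="i - j" and l=l and k=k and N=N] 3 nl1 i j by auto
      next
        case 4
        have "(l + j - k - s) mod int N = 0" using dv by (simp add: dvd_eq_mod_eq_0)
        then have "(- (l + j - k - s)) mod int N = 0" by (rule modneg0)
        then have "(k - l - (j - i)) mod int N = 0" using 4 by (simp add: algebra_simps)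
        then show False using wpart[OF j i, where e="j - i" and l=k and k=l and N=N] 4 nl2 i j by auto
      next
        case 5
        have "(l - k - 0) mod int N = 0" using dv 5 by (simp add: dvd_eq_mod_eq_0 algebra_simps)
        then show False using dpart[where i=i and j=j and m=m and l=l and k=k and N=N] 5 i j nl1 by auto
      next
        case 6
        have "(l + j - k - s) mod int N = 0" using dv by (simp add: dvd_eq_mod_eq_0)
        then have "(- (l + j - k - s)) mod int N = 0" by (rule modneg0)
        then have "(k - l - 0) mod int N = 0" using 6 by (simp add: algebra_simps)
        then show False using dpart[where i=j and j=i and m=m and l=k and k=l and N=N] 6 i j nl2 by auto
      qed
    qed
    then have "(of_int (sgn (i - s)) + of_int (sgn (j - s)) :: complex) = 0"
      by (metis of_int_add of_int_0)
    then show ?thesis by simp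
  qed
qed

lemma Wcl_zero_nl:
  assumes N: "0 < N" and i: "0 \<le> i" "i \<le> int m" and j: "0 \<le> j" "j \<le> int m"
    and nl1: "\<not> listed N m i k j l" and nl2: "\<not> listed N m j l i k"
  shows "Wcl N i j ((l - k) mod int N) = 0"
proof -
  define d where "d = (l - k) mod int N"
  have d: "0 \<le> d" "d < int N" using N unfolding d_def by auto
  have dv: "int N dvd (l - k - d)" unfolding d_def by (simp add: minus_mod_eq_mult_div)
  then have cd: "(l - k - d) mod int N = 0" by (simp add: dvd_eq_mod_eq_0)
  have "int N dvd (- (l - k - d))" using dv by (simp only: dvd_minus_iff)
  then have "int N dvd (- (l - k - d) - int N)" by (rule dvd_diff) simp
  moreover have e: "k - l - (int N - d) = - (l - k - d) - int N" by simp
  ultimately have "int N dvd (k - l - (int N - d))" by (simp only: e)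
  then have cd': "(k - l - (int N - d)) mod int N = 0" by (simp only: dvd_eq_mod_eq_0)
  have A: "(if d = 0 then sgn (i - j) else 0) = 0"
  proof (cases "d = 0 \<and> i \<noteq> j")
    case True
    then have c0: "(l - k - 0) mod int N = 0" using cd by simp
    have c0': "(k - l - 0) mod int N = 0" using modneg0[OF c0] by simp
    show ?thesis
    proof (cases "i < j")
      case True then show ?thesis using dpart[OF i(1) True j(2) c0] nl1 by simp
    next
      case False then have "j < i" using \<open>d = 0 \<and> i \<noteq> j\<close> by auto
      then show ?thesis using dpart[OF j(1) \<open>j < i\<close> i(2) c0'] nl2 by simp
    qed
  qed auto
  have B: "(if 1 \<le> d \<and> d \<le> i then 1 + sgn (d + j - i) else 0) = 0"
  proof (cases "1 \<le> d \<and> d \<le> i \<and> i \<le> d + j")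
    case True then show ?thesis using wpart[OF i j, where e=d and l=l and k=k and N=N] cd nl1 by auto
  qed (auto simp: sgn_if)
  have C: "(if 1 \<le> int N - d \<and> int N - d \<le> j then 1 + sgn (int N - d + i - j) else 0) = 0"
  proof (cases "1 \<le> int N - d \<and> int N - d \<le> j \<and> j \<le> int N - d + i")
    case True then show ?thesis using wpart[OF j i, where e="int N - d" and l=k and k=l and N=N] cd' nl2 by auto
  qed (auto simp: sgn_if)
  show ?thesis unfolding d_def[symmetric] Wcl_def using A B C by simp
qed

lemma zero_claim:
  assumes N: "0 < N" and Nm: "2 * m + 2 \<le> N" and i: "0 \<le> i" "i \<le> int m" and j: "0 \<le> j" "j \<le> int m"
    and nl1: "\<not> listed N m i k j l" and nl2: "\<not> listed N m j l i k"
  shows "PB2 N (coord N m i k) (coord N m j l) (Tmat N m b a) = 0"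
  unfolding PB_coord[OF N Nm i j] Fsum_zero_nl[OF i j nl1 nl2] Wcl_zero_nl[OF N i j nl1 nl2] by simp

theorem mainTheorem4:
  fixes N m :: nat
  assumes "1 \<le> m" and "2 * m + 2 \<le> N"
  shows "poisson_submanifold N (PB2 N) (Tset N m)
   \<and> (\<forall>L\<in>Tset N m. \<forall>k::int.
       PB2 N (coord N m 0 k) (coord N m 0 (k + 1)) L = - coord N m 1 k L
     \<and> (\<forall>j\<in>{1..int m}.
          PB2 N (coord N m 0 k) (coord N m j (k + 1)) L = - coord N m (j + 1) k L
        \<and> PB2 N (coord N m j k) (coord N m 0 (k + j + 1)) L = - coord N m (j + 1) k L
        \<and> PB2 N (coord N m 0 k) (coord N m j k) L = - coord N m 0 k L * coord N m j k L
        \<and> PB2 N (coord N m j k) (coord N m 0 (k + j)) L = - coord N m j k L * coord N m 0 (k + j) L)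
     \<and> (\<forall>i\<in>{1..int m}. \<forall>j\<in>{1..int m}.
          PB2 N (coord N m i k) (coord N m j (k + i + 1)) L = - coord N m (i + j + 1) k L
        \<and> (i < j \<longrightarrow>
             PB2 N (coord N m i k) (coord N m j k) L = - coord N m i k L * coord N m j k L
           \<and> PB2 N (coord N m j k) (coord N m i (k + j - i)) L
               = - coord N m j k L * coord N m i (k + j - i) L)
        \<and> (i \<le> j \<longrightarrow> (\<forall>r\<in>{1..i}.
             PB2 N (coord N m i k) (coord N m j (k + r)) L
               = - coord N m i k L * coord N m j (k + r) L
                 - coord N m (j + r) k L * coord N m (i - r) (k + r) L))
        \<and> (i \<le> j \<longrightarrow> (\<forall>r\<in>{j - i + 1..j}.
             PB2 N (coord N m j k) (coord N m i (k + r)) L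
               = - coord N m j k L * coord N m i (k + r) L
                 - coord N m (i + r) k L * coord N m (j - r) (k + r) L)))
     \<and> (\<forall>i\<in>{0..int m}. \<forall>j\<in>{0..int m}. \<forall>l::int.
          \<not> listed N m i k j l \<and> \<not> listed N m j l i k
          \<longrightarrow> PB2 N (coord N m i k) (coord N m j l) L = 0))"
proof -
  have N: "0 < N" using assms by linarith
  have Nm: "2 * m + 2 \<le> N" and m1: "1 \<le> m" using assms by auto
  show ?thesis
  proof (intro conjI ballI allI impI)
    show "poisson_submanifold N (PB2 N) (Tset N m)" by (rule part1[OF N Nm])
  next
    fix L k assume L: "L \<in> Tset N m"
    then obtain b a where Ld: "L = Tmat N m b a" unfolding Tset_def by blast
    show "PB2 N (coord N m 0 k) (coord N m 0 (k + 1)) L = - coord N m 1 k L"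
      unfolding Ld by (rule c0[OF N Nm m1])
    {
      fix j assume j: "j \<in> {1..int m}"
      then have j1: "1 \<le> j" "j \<le> int m" by auto
      show "PB2 N (coord N m 0 k) (coord N m j (k + 1)) L = - coord N m (j + 1) k L"
        unfolding Ld by (rule c1[OF N Nm m1 j1])
      show "PB2 N (coord N m j k) (coord N m 0 (k + j + 1)) L = - coord N m (j + 1) k L"
        unfolding Ld by (rule c2[OF N Nm m1 j1])
      show "PB2 N (coord N m 0 k) (coord N m j k) L = - coord N m 0 k L * coord N m j k L"
        unfolding Ld by (rule c3[OF N Nm m1 j1])
      show "PB2 N (coord N m j k) (coord N m 0 (k + j)) L = - coord N m j k L * coord N m 0 (k + j) L"
        unfolding Ld by (rule c4[OF N Nm m1 j1])
    }
    {
      fix i j assume i: "i \<in> {1..int m}" and j: "j \<in> {1..int m}"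
      then have i1: "1 \<le> i" "i \<le> int m" and j1: "1 \<le> j" "j \<le> int m" by auto
      show "PB2 N (coord N m i k) (coord N m j (k + i + 1)) L = - coord N m (i + j + 1) k L"
        unfolding Ld by (rule c5[OF N Nm m1 i1 j1])
      {
        assume ij: "i < j"
        show "PB2 N (coord N m i k) (coord N m j k) L = - coord N m i k L * coord N m j k L"
          unfolding Ld by (rule c6[OF N Nm m1 i1(1) ij j1(2)])
        show "PB2 N (coord N m j k) (coord N m i (k + j - i)) L = - coord N m j k L * coord N m i (k + j - i) L"
          unfolding Ld by (rule c7[OF N Nm m1 i1(1) ij j1(2)])
      }
      {
        assume ij: "i \<le> j"
        fix r assume r: "r \<in> {1..i}"
        then have r1: "1 \<le> r" "r \<le> i" by auto
        show "PB2 N (coord N m i k) (coord N m j (k + r)) L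
               = - coord N m i k L * coord N m j (k + r) L
                 - coord N m (j + r) k L * coord N m (i - r) (k + r) L"
          unfolding Ld by (rule c8[OF N Nm m1 i1(1) ij j1(2) r1])
      }
      {
        assume ij: "i \<le> j"
        fix r assume r: "r \<in> {j - i + 1..j}"
        then have r1: "j - i + 1 \<le> r" "r \<le> j" by auto
        show "PB2 N (coord N m j k) (coord N m i (k + r)) L
               = - coord N m j k L * coord N m i (k + r) L
                 - coord N m (i + r) k L * coord N m (j - r) (k + r) L"
          unfolding Ld by (rule c9[OF N Nm m1 i1(1) ij j1(2) r1])
      }
    }
    {
      fix i j l assume i: "i \<in> {0..int m}" and j: "j \<in> {0..int m}"
        and nl: "\<not> listed N m i k j l \<and> \<not> listed N m j l i k"
      then have i0: "0 \<le> i" "i \<le> int m" and j0: "0 \<le> j" "j \<le> int m" by auto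
      show "PB2 N (coord N m i k) (coord N m j l) L = 0"
        unfolding Ld using nl by (intro zero_claim[OF N Nm i0 j0]) auto
    }
  qed
qed

end
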